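(* For $i\ge 2$ let $X_i$ be a random variable with distribution $p_i$, where $p_i(r)=\lim_{n\to\infty}\Pr(T^{(n)}_{1,i}=r)$ and $T^{(n)}$ is a uniformly random standard Young tableau of shape $(n,n)$. Let $\mu_i=\mathbb E X_i$, $\sigma_i^2=\mathrm{Var}(X_i)$ and $m_{i,k}=\mathbb E[(X_i-\mu_i)^k]/\sigma_i^k$. Then as $i\to\infty$: $$m_{i,3}\to\frac{2(5\pi-16)\sqrt2}{(3\pi-8)^{3/2}},\qquad m_{i,4}\to\frac{15\pi^2+16\pi-192}{(3\pi-8)^2},$$ $$m_{i,5}\to\frac{2(51\pi^2-80\pi-256)\sqrt2}{(3\pi-8)^{5/2}},\qquad m_{i,6}\to\frac{105\pi^3+648\pi^2-2240\pi-2560}{(3\pi-8)^3}.$$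
   Context: A standard Young tableau of shape $(n,n)$ is a bijective filling $T$ of the cells $[a,b]$, $a\in\{1,2\}$, $1\le b\le n$, by $\{1,\dots,2n\}$ that increases along rows and down columns; $T_{1,i}$ denotes the entry in row 1, column $i$. The limits $p_i(r)$ exist and form a probability distribution on $\{i,\dots,2i-1\}$. *)

theory Defs
  imports Complex_Main
begin

text \<open>A tableau is a function T with T a b the entry in row a, column b.
  Cells of shape (n,n): rows 1,2 and columns 1..n. Outside the cells T is 0
  (normalisation so that the set of tableaux is finite).\<close>

definition cells :: "nat \<Rightarrow> (nat \<times> nat) set" where
  "cells n = {1,2} \<times> {1..n}"

definition SYT :: "nat \<Rightarrow> (nat \<Rightarrow> nat \<Rightarrow> nat) set" where
  "SYT n = {T. bij_betw (\<lambda>(a,b). T a b) (cells n) {1..2*n}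
              \<and> (\<forall>a b. (a,b) \<notin> cells n \<longrightarrow> T a b = 0)
              \<and> (\<forall>a b. (a,b) \<in> cells n \<longrightarrow> (a,b+1) \<in> cells n \<longrightarrow> T a b < T a (b+1))
              \<and> (\<forall>b. (1,b) \<in> cells n \<longrightarrow> T 1 b < T 2 b)}"

definition prob_entry :: "nat \<Rightarrow> nat \<Rightarrow> nat \<Rightarrow> real" where
  "prob_entry n i r = real (card {T \<in> SYT n. T 1 i = r}) / real (card (SYT n))"

definition p :: "nat \<Rightarrow> nat \<Rightarrow> real" where
  "p i r = lim (\<lambda>n. prob_entry n i r)"

text \<open>X_i is supported on {i..2i-1}.\<close>
definition mu :: "nat \<Rightarrow> real" where
  "mu i = (\<Sum>r\<in>{i..2*i-1}. real r * p i r)"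

definition sigma :: "nat \<Rightarrow> real" where
  "sigma i = sqrt (\<Sum>r\<in>{i..2*i-1}. (real r - mu i)^2 * p i r)"

definition std_moment :: "nat \<Rightarrow> nat \<Rightarrow> real" where
  "std_moment i k = (\<Sum>r\<in>{i..2*i-1}. (real r - mu i)^k * p i r) / sigma i ^ k"

end

theory Submission
  imports Defs "HOL-Analysis.Gamma_Function" "HOL-Real_Asymp.Real_Asymp" "HOL-Library.FuncSet"
begin


definition W :: "nat \<Rightarrow> nat \<Rightarrow> real" where
  "W i j = real ((i - 1 + j) choose j) / 2^(i+j)"

lemma W_step:
  assumes "1 \<le> i"
  shows "real (Suc j) * W i (Suc j) = (real i + real j) / 2 * W i j"
proof -
  obtain m where m: "i = Suc m" using assms by (cases i) auto
  have e: "real (Suc (m + j)) * real ((m + j) choose j) = real ((Suc (m + j)) choose (Suc j)) * real (Suc j)"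
    using Suc_times_binomial_eq[of "m+j" j] by (metis of_nat_mult)
  have "real (Suc j) * W i (Suc j) = real ((Suc (m + j)) choose (Suc j)) * real (Suc j) / 2^(Suc m + Suc j)"
    unfolding W_def m by (simp add: ac_simps)
  also have "\<dots> = real (Suc (m + j)) * real ((m + j) choose j) / 2^(Suc m + Suc j)"
    using e by simp
  also have "\<dots> = (real i + real j) / 2 * W i j"
    unfolding W_def m by (simp add: field_simps)
  finally show ?thesis .
qed

lemma W_tele:
  assumes "1 \<le> i"
  shows "(\<Sum>j<i. ((real i + real j) / 2 * Y (real j + 1) - real j * Y (real j)) * W i j)
         = real i * Y (real i) * W i i"
proof -
  have "(\<Sum>j<i. ((real i + real j) / 2 * Y (real j + 1) - real j * Y (real j)) * W i j)
      = (\<Sum>j<i. (\<lambda>j. Y (real j) * (real j * W i j)) (Suc j) - (\<lambda>j. Y (real j) * (real j * W i j)) j)"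
  proof (rule sum.cong[OF refl])
    fix j assume "j \<in> {..<i}"
    have "real (Suc j) * W i (Suc j) = (real i + real j) / 2 * W i j" by (rule W_step[OF assms])
    then have "Y (real j + 1) * (real (Suc j) * W i (Suc j)) = Y (real j + 1) * ((real i + real j) / 2 * W i j)"
      by simp
    then show "((real i + real j) / 2 * Y (real j + 1) - real j * Y (real j)) * W i j
       = (\<lambda>j. Y (real j) * (real j * W i j)) (Suc j) - (\<lambda>j. Y (real j) * (real j * W i j)) j"
      by (simp add: algebra_simps)
  qed
  also have "\<dots> = real i * Y (real i) * W i i"
    by (subst sum_lessThan_telescope) simp
  finally show ?thesis .
qed

lemma W_sum:
  assumes "1 \<le> i"
  shows "(\<Sum>j<i. W i j) = 1/2"
proof -
  obtain m where m: "i = Suc m" using assms by (cases i) auto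
  have g: "(\<Sum>k\<le>m. (of_nat (m + k) gchoose k :: real) / 2 ^ k) = 2 ^ m"
    by (rule gbinomial_sum_nat_pow2)
  have "(\<Sum>j<i. W i j) = (\<Sum>k\<le>m. (of_nat (m + k) gchoose k :: real) / 2 ^ k) / 2^(Suc m)"
    unfolding m W_def lessThan_Suc_atMost
    by (simp add: sum_divide_distrib binomial_gbinomial power_add field_simps)
  then show ?thesis using g by simp
qed

lemma W_gen:
  assumes "1 \<le> i" and "\<And>y. f y = (real i + y) / 2 * Y (y + 1) - y * Y y + K"
  shows "(\<Sum>j<i. f (real j) * W i j) = real i * Y (real i) * W i i + K / 2"
proof -
  have "(\<Sum>j<i. f (real j) * W i j) = (\<Sum>j<i. ((real i + real j) / 2 * Y (real j + 1) - real j * Y (real j)) * W i j + K * W i j)"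
    by (intro sum.cong refl) (simp add: assms(2) algebra_simps)
  also have "\<dots> = real i * Y (real i) * W i i + K / 2"
    unfolding sum.distrib W_tele[OF assms(1)] sum_distrib_left[symmetric] W_sum[OF assms(1)] by simp
  finally show ?thesis .
qed


definition cen :: "nat \<Rightarrow> real" where "cen n = real ((2*n) choose n) / 4^n"

lemma cen_Suc: "cen (Suc n) = cen n * (2 * real n + 1) / (2 * real n + 2)"
proof -
  have a: "(Suc n) * ((2*n+1) choose n) = (2*n+1) * ((2*n) choose n)"
    using binomial_absorb_comp[of "2*n+1" n] by simp
  have b: "(2*n+2) * ((2*n+1) choose n) = ((2*n+2) choose (Suc n)) * Suc n"
    using Suc_times_binomial_eq[of "2*n+1" n] by simp
  have "real ((2*n+2) choose (Suc n)) * (real n + 1)^2 = (2*real n+2) * (2*real n + 1) * real ((2*n) choose n)"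
  proof -
    have "real ((2*n+2) choose (Suc n)) * (real n + 1)^2 = real (((2*n+2) choose (Suc n)) * Suc n) * real (Suc n)"
      by (simp del: binomial_Suc_Suc add: power2_eq_square algebra_simps)
    also have "\<dots> = real ((2*n+2) * ((2*n+1) choose n)) * real (Suc n)" using b by simp
    also have "\<dots> = (2*real n+2) * real ((Suc n) * ((2*n+1) choose n))" by (simp add: algebra_simps)
    also have "\<dots> = (2*real n+2) * (2*real n + 1) * real ((2*n) choose n)" using a by (simp only: of_nat_mult) simp
    finally show ?thesis .
  qed
  then have "real ((2*n+2) choose (Suc n)) = (2*real n+2) * (2*real n + 1) * real ((2*n) choose n) / (real n + 1)^2"
    by (simp add: field_simps)
  moreover have "cen (Suc n) = real ((2*n+2) choose (Suc n)) / 4^(Suc n)"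
    unfolding cen_def by (simp del: binomial_Suc_Suc)
  ultimately have "cen (Suc n) = (2*real n+2) * (2*real n + 1) * real ((2*n) choose n) / (real n + 1)^2 / 4^(Suc n)"
    by simp
  also have "\<dots> = cen n * (2 * real n + 1) * (2 * real n + 2) / (4 * (real n + 1)^2)"
    unfolding cen_def by (simp add: field_simps)
  also have "\<dots> = cen n * (2 * real n + 1) / (2 * real n + 2)"
  proof -
    define x where "x = real n + 1"
    have x: "x > 0" unfolding x_def by simp
    have e1: "2 * real n + 2 = 2 * x" "2 * real n + 1 = 2 * x - 1" "real n + 1 = x" unfolding x_def by simp_all
    show ?thesis unfolding e1 using x by (simp add: field_simps power2_eq_square)
  qed
  finally show ?thesis .
qed

lemma cen_pos: "cen n > 0" unfolding cen_def by simp

lemma wallis_cen: "(\<Prod>k=1..n. (4*real k^2) / (4*real k^2 - 1)) = 1 / (cen n ^ 2 * (2 * real n + 1))"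
proof (induction n)
  case 0 then show ?case by (simp add: cen_def)
next
  case (Suc n)
  have "(\<Prod>k=1..Suc n. (4*real k^2) / (4*real k^2 - 1)) = 1 / (cen n ^ 2 * (2 * real n + 1)) * ((4*real (Suc n)^2) / (4*real (Suc n)^2 - 1))"
    using Suc by (simp add: prod.cl_ivl_Suc ac_simps del: of_nat_Suc) 
  also have "\<dots> = 1 / (cen (Suc n) ^ 2 * (2 * real (Suc n) + 1))"
    using cen_pos[of n] unfolding cen_Suc by (simp add: field_simps power2_eq_square)
  finally show ?case .
qed

lemma cen_lim: "(\<lambda>n. sqrt (real n) * cen n) \<longlonglongrightarrow> 1 / sqrt pi"
proof -
  have w: "(\<lambda>n. 1 / (cen n ^ 2 * (2 * real n + 1))) \<longlonglongrightarrow> pi / 2"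
    using wallis unfolding wallis_cen .
  have "(\<lambda>n. inverse (1 / (cen n ^ 2 * (2 * real n + 1)))) \<longlonglongrightarrow> inverse (pi / 2)"
    by (rule tendsto_inverse[OF w]) simp
  then have w2: "(\<lambda>n. cen n ^ 2 * (2 * real n + 1)) \<longlonglongrightarrow> 2 / pi" by simp
  have r: "(\<lambda>n. real n / (2 * real n + 1)) \<longlonglongrightarrow> 1/2" by real_asymp
  have "(\<lambda>n. cen n ^ 2 * (2 * real n + 1) * (real n / (2 * real n + 1))) \<longlonglongrightarrow> 2 / pi * (1/2)"
    by (rule tendsto_mult[OF w2 r])
  moreover have "(\<lambda>n. cen n ^ 2 * (2 * real n + 1) * (real n / (2 * real n + 1))) = (\<lambda>n. cen n ^ 2 * real n)"
  proof
    fix n have "2 * real n + 1 > 0" by simp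
    then show "cen n ^ 2 * (2 * real n + 1) * (real n / (2 * real n + 1)) = cen n ^ 2 * real n" by (simp add: field_simps)
  qed
  ultimately have "(\<lambda>n. cen n ^ 2 * real n) \<longlonglongrightarrow> 1 / pi" by simp
  then have "(\<lambda>n. sqrt (cen n ^ 2 * real n)) \<longlonglongrightarrow> sqrt (1 / pi)" by (rule tendsto_real_sqrt)
  moreover have "\<And>n. sqrt (cen n ^ 2 * real n) = sqrt (real n) * cen n"
    using cen_pos by (simp add: real_sqrt_mult less_imp_le)
  ultimately show ?thesis by (simp add: real_sqrt_divide)
qed


definition pw :: "nat \<Rightarrow> nat \<Rightarrow> real" where
  "pw i j = (real i - real j) * (real i - real j + 1) / real i * W i j"

definition E :: "nat \<Rightarrow> nat \<Rightarrow> real" where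
  "E t i = (\<Sum>j<i. (real i - real j)^t * pw i j)"

lemma W_diag: "1 \<le> i \<Longrightarrow> W i i = cen i / 2"
proof -
  assume "1 \<le> i"
  then obtain m where m: "i = Suc m" by (cases i) auto
  have s: "(Suc (m+m) choose m) = (Suc (m+m) choose Suc m)"
    using binomial_symmetric[of m "Suc (m+m)"] by simp
  have c2: "(Suc (Suc (m+m)) choose (Suc m)) = 2 * (Suc (m+m) choose Suc m)"
    by (simp only: binomial_Suc_Suc s) simp
  have w: "W i i = real (Suc (m+m) choose Suc m) / 2^(Suc m + Suc m)"
    unfolding W_def m by simp
  have c: "cen i = real (Suc (Suc (m+m)) choose Suc m) / 4^Suc m"
    unfolding cen_def m by (simp only: mult_2 add_Suc_right add_Suc)
  have f: "(4::real)^Suc m = 2^(Suc m + Suc m)" by (simp flip: power_mult_distrib add: power_add)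
  show ?thesis unfolding w c c2 f by (simp del: binomial_Suc_Suc add: field_simps)
qed

lemma E_closed:
  assumes i: "1 \<le> i" and n: "n = t + 1"
    and id: "\<And>x y. (x - y)^n * (x - y + 1) = (x + y) / 2 * Y x (y + 1) - y * Y x y + K x"
  shows "E t i = Y (real i) (real i) * W i i + K (real i) / (2 * real i)"
proof -
  have ip: "real i > 0" using i by simp
  have "real i * E t i = (\<Sum>j<i. (\<lambda>y. (real i - y)^(t+1) * (real i - y + 1)) (real j) * W i j)"
    unfolding E_def pw_def sum_distrib_left
    by (intro sum.cong refl) (use ip in \<open>simp add: field_simps power_Suc\<close>)
  also have "\<dots> = real i * Y (real i) (real i) * W i i + K (real i) / 2"
    by (rule W_gen[OF i]) (rule id[unfolded n])
  finally show ?thesis using ip by (simp add: field_simps)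
qed

lemma E_lim:
  assumes closed: "\<And>i. 1 \<le> i \<Longrightarrow> E t i = Y (real i) * W i i + K (real i) / (2 * real i)"
    and a: "(\<lambda>i. Y (real i) / (2 * sqrt (real i) ^ (t + 1))) \<longlonglongrightarrow> a"
    and b: "(\<lambda>i. K (real i) / (2 * real i * sqrt (real i) ^ t)) \<longlonglongrightarrow> b"
  shows "(\<lambda>i. E t i / sqrt (real i) ^ t) \<longlonglongrightarrow> a / sqrt pi + b"
proof -
  have "(\<lambda>i. Y (real i) / (2 * sqrt (real i) ^ (t + 1)) * (sqrt (real i) * cen i) + K (real i) / (2 * real i * sqrt (real i) ^ t))
        \<longlonglongrightarrow> a * (1 / sqrt pi) + b"
    by (intro tendsto_intros a b cen_lim)
  moreover have "eventually (\<lambda>i. Y (real i) / (2 * sqrt (real i) ^ (t + 1)) * (sqrt (real i) * cen i) + K (real i) / (2 * real i * sqrt (real i) ^ t)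
      = E t i / sqrt (real i) ^ t) sequentially"
  proof (rule eventually_sequentiallyI[of 1])
    fix i :: nat assume i: "1 \<le> i"
    have sp: "sqrt (real i) > 0" using i by simp
    have si: "sqrt (real i) * sqrt (real i) = real i" by simp
    show "Y (real i) / (2 * sqrt (real i) ^ (t + 1)) * (sqrt (real i) * cen i) + K (real i) / (2 * real i * sqrt (real i) ^ t)
      = E t i / sqrt (real i) ^ t"
      unfolding closed[OF i] W_diag[OF i] using sp
      by (simp add: field_simps)
  qed
  ultimately show ?thesis by (simp add: tendsto_cong)
qed

definition Yp0 :: "real \<Rightarrow> real \<Rightarrow> real" where
  "Yp0 x y = (2)*x^1 + (-2)*y^1"

definition Kp0 :: "real \<Rightarrow> real" where
  "Kp0 x = (2)*x^1"

definition Yd0 :: "real \<Rightarrow> real" where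
  "Yd0 x = 0"

lemma Yid0: "(x - y)^1 * (x - y + 1) = (x + y) / 2 * Yp0 x (y + 1) - y * Yp0 x y + Kp0 x"
  unfolding Yp0_def Kp0_def by algebra

lemma Ydiag0: "Yp0 x x = Yd0 x"
  unfolding Yp0_def Yd0_def by algebra

lemma Elim0: "(\<lambda>i. E 0 i / sqrt (real i) ^ 0) \<longlonglongrightarrow> 0 / sqrt pi + 1"
proof (rule E_lim[where Y="Yd0" and K=Kp0])
  show "\<And>i. 1 \<le> i \<Longrightarrow> E 0 i = Yd0 (real i) * W i i + Kp0 (real i) / (2 * real i)"
    using E_closed[where Y=Yp0 and K=Kp0 and n=1 and t=0, OF _ _ Yid0] by (simp add: Ydiag0)
  show "(\<lambda>i. Yd0 (real i) / (2 * sqrt (real i) ^ (0 + 1))) \<longlonglongrightarrow> 0"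
    unfolding Yd0_def by real_asymp
  show "(\<lambda>i. Kp0 (real i) / (2 * real i * sqrt (real i) ^ 0)) \<longlonglongrightarrow> 1"
    unfolding Kp0_def by real_asymp
qed

definition Yp1 :: "real \<Rightarrow> real \<Rightarrow> real" where
  "Yp1 x y = (4) + (6)*x^1 + (2)*x^2 + (2)*y^1 + (-4)*x^1*y^1 + (2)*y^2"

definition Kp1 :: "real \<Rightarrow> real" where
  "Kp1 x = (-4)*x^1"

definition Yd1 :: "real \<Rightarrow> real" where
  "Yd1 x = (4) + (8)*x^1"

lemma Yid1: "(x - y)^2 * (x - y + 1) = (x + y) / 2 * Yp1 x (y + 1) - y * Yp1 x y + Kp1 x"
  unfolding Yp1_def Kp1_def by algebra

lemma Ydiag1: "Yp1 x x = Yd1 x"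
  unfolding Yp1_def Yd1_def by algebra

lemma Elim1: "(\<lambda>i. E 1 i / sqrt (real i) ^ 1) \<longlonglongrightarrow> 4 / sqrt pi + 0"
proof (rule E_lim[where Y="Yd1" and K=Kp1])
  show "\<And>i. 1 \<le> i \<Longrightarrow> E 1 i = Yd1 (real i) * W i i + Kp1 (real i) / (2 * real i)"
    using E_closed[where Y=Yp1 and K=Kp1 and n=2 and t=1, OF _ _ Yid1] by (simp add: Ydiag1)
  show "(\<lambda>i. Yd1 (real i) / (2 * sqrt (real i) ^ (1 + 1))) \<longlonglongrightarrow> 4"
    unfolding Yd1_def by real_asymp
  show "(\<lambda>i. Kp1 (real i) / (2 * real i * sqrt (real i) ^ 1)) \<longlonglongrightarrow> 0"
    unfolding Kp1_def by real_asymp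
qed

definition Yp2 :: "real \<Rightarrow> real \<Rightarrow> real" where
  "Yp2 x y = (-20) + (-26)*x^1 + (8)*x^2 + (2)*x^3 + (-14)*y^1 + (-4)*x^1*y^1 + (-6)*x^2*y^1 + (-4)*y^2 + (6)*x^1*y^2 + (-2)*y^3"

definition Kp2 :: "real \<Rightarrow> real" where
  "Kp2 x = (20)*x^1 + (12)*x^2"

definition Yd2 :: "real \<Rightarrow> real" where
  "Yd2 x = (-20) + (-40)*x^1"

lemma Yid2: "(x - y)^3 * (x - y + 1) = (x + y) / 2 * Yp2 x (y + 1) - y * Yp2 x y + Kp2 x"
  unfolding Yp2_def Kp2_def by algebra

lemma Ydiag2: "Yp2 x x = Yd2 x"
  unfolding Yp2_def Yd2_def by algebra

lemma Elim2: "(\<lambda>i. E 2 i / sqrt (real i) ^ 2) \<longlonglongrightarrow> 0 / sqrt pi + 6"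
proof (rule E_lim[where Y="Yd2" and K=Kp2])
  show "\<And>i. 1 \<le> i \<Longrightarrow> E 2 i = Yd2 (real i) * W i i + Kp2 (real i) / (2 * real i)"
    using E_closed[where Y=Yp2 and K=Kp2 and n=3 and t=2, OF _ _ Yid2] by (simp add: Ydiag2)
  show "(\<lambda>i. Yd2 (real i) / (2 * sqrt (real i) ^ (2 + 1))) \<longlonglongrightarrow> 0"
    unfolding Yd2_def by real_asymp
  show "(\<lambda>i. Kp2 (real i) / (2 * real i * sqrt (real i) ^ 2)) \<longlonglongrightarrow> 6"
    unfolding Kp2_def by real_asymp
qed

definition Yp3 :: "real \<Rightarrow> real \<Rightarrow> real" where
  "Yp3 x y = (124) + (194)*x^1 + (2)*x^2 + (10)*x^3 + (2)*x^4 + (86)*y^1 + (32)*x^1*y^1 + (-14)*x^2*y^1 + (-8)*x^3*y^1 + (30)*y^2 + (-2)*x^1*y^2 + (12)*x^2*y^2 + (6)*y^3 + (-8)*x^1*y^3 + (2)*y^4"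

definition Kp3 :: "real \<Rightarrow> real" where
  "Kp3 x = (-124)*x^1 + (-108)*x^2"

definition Yd3 :: "real \<Rightarrow> real" where
  "Yd3 x = (124) + (280)*x^1 + (64)*x^2"

lemma Yid3: "(x - y)^4 * (x - y + 1) = (x + y) / 2 * Yp3 x (y + 1) - y * Yp3 x y + Kp3 x"
  unfolding Yp3_def Kp3_def by algebra

lemma Ydiag3: "Yp3 x x = Yd3 x"
  unfolding Yp3_def Yd3_def by algebra

lemma Elim3: "(\<lambda>i. E 3 i / sqrt (real i) ^ 3) \<longlonglongrightarrow> 32 / sqrt pi + 0"
proof (rule E_lim[where Y="Yd3" and K=Kp3])
  show "\<And>i. 1 \<le> i \<Longrightarrow> E 3 i = Yd3 (real i) * W i i + Kp3 (real i) / (2 * real i)"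
    using E_closed[where Y=Yp3 and K=Kp3 and n=4 and t=3, OF _ _ Yid3] by (simp add: Ydiag3)
  show "(\<lambda>i. Yd3 (real i) / (2 * sqrt (real i) ^ (3 + 1))) \<longlonglongrightarrow> 32"
    unfolding Yd3_def by real_asymp
  show "(\<lambda>i. Kp3 (real i) / (2 * real i * sqrt (real i) ^ 3)) \<longlonglongrightarrow> 0"
    unfolding Kp3_def by real_asymp
qed

definition Yp4 :: "real \<Rightarrow> real \<Rightarrow> real" where
  "Yp4 x y = (-932) + (-1666)*x^1 + (-284)*x^2 + (8)*x^3 + (12)*x^4 + (2)*x^5 + (-646)*y^1 + (-388)*x^1*y^1 + (52)*x^2*y^1 + (-28)*x^3*y^1 + (-10)*x^4*y^1 + (-224)*y^2 + (-8)*x^1*y^2 + (12)*x^2*y^2 + (20)*x^3*y^2 + (-52)*y^3 + (12)*x^1*y^3 + (-20)*x^2*y^3 + (-8)*y^4 + (10)*x^1*y^4 + (-2)*y^5"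

definition Kp4 :: "real \<Rightarrow> real" where
  "Kp4 x = (932)*x^1 + (1020)*x^2 + (120)*x^3"

definition Yd4 :: "real \<Rightarrow> real" where
  "Yd4 x = (-932) + (-2312)*x^1 + (-896)*x^2"

lemma Yid4: "(x - y)^5 * (x - y + 1) = (x + y) / 2 * Yp4 x (y + 1) - y * Yp4 x y + Kp4 x"
  unfolding Yp4_def Kp4_def by algebra

lemma Ydiag4: "Yp4 x x = Yd4 x"
  unfolding Yp4_def Yd4_def by algebra

lemma Elim4: "(\<lambda>i. E 4 i / sqrt (real i) ^ 4) \<longlonglongrightarrow> 0 / sqrt pi + 60"
proof (rule E_lim[where Y="Yd4" and K=Kp4])
  show "\<And>i. 1 \<le> i \<Longrightarrow> E 4 i = Yd4 (real i) * W i i + Kp4 (real i) / (2 * real i)"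
    using E_closed[where Y=Yp4 and K=Kp4 and n=5 and t=4, OF _ _ Yid4] by (simp add: Ydiag4)
  show "(\<lambda>i. Yd4 (real i) / (2 * sqrt (real i) ^ (4 + 1))) \<longlonglongrightarrow> 0"
    unfolding Yd4_def by real_asymp
  show "(\<lambda>i. Kp4 (real i) / (2 * real i * sqrt (real i) ^ 4)) \<longlonglongrightarrow> 60"
    unfolding Kp4_def by real_asymp
qed

definition Yp5 :: "real \<Rightarrow> real \<Rightarrow> real" where
  "Yp5 x y = (8284) + (16362)*x^1 + (4938)*x^2 + (-68)*x^3 + (16)*x^4 + (14)*x^5 + (2)*x^6 + (5742)*y^1 + (4528)*x^1*y^1 + (-76)*x^2*y^1 + (64)*x^3*y^1 + (-46)*x^4*y^1 + (-12)*x^5*y^1 + (1990)*y^2 + (452)*x^1*y^2 + (-96)*x^2*y^2 + (44)*x^3*y^2 + (30)*x^4*y^2 + (460)*y^3 + (-64)*x^1*y^3 + (4)*x^2*y^3 + (-40)*x^3*y^3 + (80)*y^4 + (-26)*x^1*y^4 + (30)*x^2*y^4 + (10)*y^5 + (-12)*x^1*y^5 + (2)*y^6"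

definition Kp5 :: "real \<Rightarrow> real" where
  "Kp5 x = (-8284)*x^1 + (-10620)*x^2 + (-2400)*x^3"

definition Yd5 :: "real \<Rightarrow> real" where
  "Yd5 x = (8284) + (22104)*x^1 + (11456)*x^2 + (768)*x^3"

lemma Yid5: "(x - y)^6 * (x - y + 1) = (x + y) / 2 * Yp5 x (y + 1) - y * Yp5 x y + Kp5 x"
  unfolding Yp5_def Kp5_def by algebra

lemma Ydiag5: "Yp5 x x = Yd5 x"
  unfolding Yp5_def Yd5_def by algebra

lemma Elim5: "(\<lambda>i. E 5 i / sqrt (real i) ^ 5) \<longlonglongrightarrow> 384 / sqrt pi + 0"
proof (rule E_lim[where Y="Yd5" and K=Kp5])
  show "\<And>i. 1 \<le> i \<Longrightarrow> E 5 i = Yd5 (real i) * W i i + Kp5 (real i) / (2 * real i)"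
    using E_closed[where Y=Yp5 and K=Kp5 and n=6 and t=5, OF _ _ Yid5] by (simp add: Ydiag5)
  show "(\<lambda>i. Yd5 (real i) / (2 * sqrt (real i) ^ (5 + 1))) \<longlonglongrightarrow> 384"
    unfolding Yd5_def by real_asymp
  show "(\<lambda>i. Kp5 (real i) / (2 * real i * sqrt (real i) ^ 5)) \<longlonglongrightarrow> 0"
    unfolding Kp5_def by real_asymp
qed

definition Yp6 :: "real \<Rightarrow> real \<Rightarrow> real" where
  "Yp6 x y = (-85220) + (-181962)*x^1 + (-75044)*x^2 + (-3274)*x^3 + (-92)*x^4 + (26)*x^5 + (16)*x^6 + (2)*x^7 + (-59070)*y^1 + (-56036)*x^1*y^1 + (-4798)*x^2*y^1 + (112)*x^3*y^1 + (62)*x^4*y^1 + (-68)*x^5*y^1 + (-14)*x^6*y^1 + (-20472)*y^2 + (-7934)*x^1*y^2 + (912)*x^2*y^2 + (-228)*x^3*y^2 + (100)*x^4*y^2 + (42)*x^5*y^2 + (-4730)*y^3 + (-112)*x^1*y^3 + (52)*x^2*y^3 + (-40)*x^3*y^3 + (-70)*x^4*y^3 + (-820)*y^4 + (202)*x^1*y^4 + (-40)*x^2*y^4 + (70)*x^3*y^4 + (-114)*y^5 + (44)*x^1*y^5 + (-42)*x^2*y^5 + (-12)*y^6 + (14)*x^1*y^6 + (-2)*y^7"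

definition Kp6 :: "real \<Rightarrow> real" where
  "Kp6 x = (85220)*x^1 + (122892)*x^2 + (39480)*x^3 + (1680)*x^4"

definition Yd6 :: "real \<Rightarrow> real" where
  "Yd6 x = (-85220) + (-241032)*x^1 + (-151552)*x^2 + (-20736)*x^3"

lemma Yid6: "(x - y)^7 * (x - y + 1) = (x + y) / 2 * Yp6 x (y + 1) - y * Yp6 x y + Kp6 x"
  unfolding Yp6_def Kp6_def by algebra

lemma Ydiag6: "Yp6 x x = Yd6 x"
  unfolding Yp6_def Yd6_def by algebra

lemma Elim6: "(\<lambda>i. E 6 i / sqrt (real i) ^ 6) \<longlonglongrightarrow> 0 / sqrt pi + 840"
proof (rule E_lim[where Y="Yd6" and K=Kp6])
  show "\<And>i. 1 \<le> i \<Longrightarrow> E 6 i = Yd6 (real i) * W i i + Kp6 (real i) / (2 * real i)"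
    using E_closed[where Y=Yp6 and K=Kp6 and n=7 and t=6, OF _ _ Yid6] by (simp add: Ydiag6)
  show "(\<lambda>i. Yd6 (real i) / (2 * sqrt (real i) ^ (6 + 1))) \<longlonglongrightarrow> 0"
    unfolding Yd6_def by real_asymp
  show "(\<lambda>i. Kp6 (real i) / (2 * real i * sqrt (real i) ^ 6)) \<longlonglongrightarrow> 840"
    unfolding Kp6_def by real_asymp
qed



definition cellsS :: "nat \<Rightarrow> nat \<Rightarrow> (nat \<times> nat) set" where
  "cellsS a b = {1} \<times> {1..a} \<union> {2} \<times> {1..b}"

definition Tab :: "nat \<Rightarrow> nat \<Rightarrow> (nat \<Rightarrow> nat \<Rightarrow> nat) set" where
  "Tab a b = {T. bij_betw (\<lambda>(x,y). T x y) (cellsS a b) {1..a+b}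
              \<and> (\<forall>x y. (x,y) \<notin> cellsS a b \<longrightarrow> T x y = 0)
              \<and> (\<forall>c. 1 \<le> c \<longrightarrow> c < a \<longrightarrow> T 1 c < T 1 (Suc c))
              \<and> (\<forall>c. 1 \<le> c \<longrightarrow> c < b \<longrightarrow> T 2 c < T 2 (Suc c))
              \<and> (\<forall>c. 1 \<le> c \<longrightarrow> c \<le> b \<longrightarrow> T 1 c < T 2 c)}"

definition setv :: "(nat \<Rightarrow> nat \<Rightarrow> nat) \<Rightarrow> nat \<Rightarrow> nat \<Rightarrow> nat \<Rightarrow> (nat \<Rightarrow> nat \<Rightarrow> nat)" where
  "setv T x0 y0 v = (\<lambda>x y. if x = x0 \<and> y = y0 then v else T x y)"

lemma cellsS_mem: "(x,y) \<in> cellsS a b \<longleftrightarrow> (x = 1 \<and> 1 \<le> y \<and> y \<le> a) \<or> (x = 2 \<and> 1 \<le> y \<and> y \<le> b)"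
  unfolding cellsS_def by auto

lemma finite_cellsS: "finite (cellsS a b)"
  unfolding cellsS_def by auto

lemma SYT_Tab: "SYT n = Tab n n"
proof -
  have c: "cells n = cellsS n n" unfolding cells_def cellsS_def by auto
  have r: "\<And>T::nat\<Rightarrow>nat\<Rightarrow>nat. (\<forall>a b. (a, b) \<in> cellsS n n \<longrightarrow> (a, b + 1) \<in> cellsS n n \<longrightarrow> T a b < T a (b + 1)) =
      ((\<forall>c. 1 \<le> c \<longrightarrow> c < n \<longrightarrow> T 1 c < T 1 (Suc c)) \<and> (\<forall>c. 1 \<le> c \<longrightarrow> c < n \<longrightarrow> T 2 c < T 2 (Suc c)))"
      unfolding cellsS_mem by auto
  have l: "\<And>T::nat\<Rightarrow>nat\<Rightarrow>nat. (\<forall>b. (1, b) \<in> cellsS n n \<longrightarrow> T 1 b < T 2 b) = (\<forall>c. 1 \<le> c \<longrightarrow> c \<le> n \<longrightarrow> T 1 c < T 2 c)"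
      unfolding cellsS_mem by auto
  show ?thesis
    unfolding SYT_def Tab_def c r l by (simp only: conj_assoc mult_2)
qed

lemma Tab_D:
  assumes "T \<in> Tab a b"
  shows "bij_betw (\<lambda>(x,y). T x y) (cellsS a b) {1..a+b}"
    "\<And>x y. (x,y) \<notin> cellsS a b \<Longrightarrow> T x y = 0"
    "\<And>c. 1 \<le> c \<Longrightarrow> c < a \<Longrightarrow> T 1 c < T 1 (Suc c)"
    "\<And>c. 1 \<le> c \<Longrightarrow> c < b \<Longrightarrow> T 2 c < T 2 (Suc c)"
    "\<And>c. 1 \<le> c \<Longrightarrow> c \<le> b \<Longrightarrow> T 1 c < T 2 c"
  using assms unfolding Tab_def by auto

lemma Tab_val:
  assumes "T \<in> Tab a b" "(x,y) \<in> cellsS a b"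
  shows "1 \<le> T x y" "T x y \<le> a + b"
proof -
  have "(\<lambda>(x,y). T x y) ` cellsS a b = {1..a+b}" using Tab_D(1)[OF assms(1)] by (simp add: bij_betw_def)
  then have "T x y \<in> {1..a+b}" using assms(2) by force
  then show "1 \<le> T x y" "T x y \<le> a + b" by auto
qed

lemma Tab_inj:
  assumes "T \<in> Tab a b" "(x,y) \<in> cellsS a b" "(x',y') \<in> cellsS a b" "T x y = T x' y'"
  shows "x = x' \<and> y = y'"
proof -
  have "inj_on (\<lambda>(x,y). T x y) (cellsS a b)" using Tab_D(1)[OF assms(1)] by (simp add: bij_betw_def)
  then show ?thesis using assms(2-4) unfolding inj_on_def by fastforce
qed

lemma Tab_surj:
  assumes "T \<in> Tab a b" "1 \<le> v" "v \<le> a + b"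
  obtains x y where "(x,y) \<in> cellsS a b" "T x y = v"
proof -
  have "(\<lambda>(x,y). T x y) ` cellsS a b = {1..a+b}" using Tab_D(1)[OF assms(1)] by (simp add: bij_betw_def)
  then have "v \<in> (\<lambda>(x,y). T x y) ` cellsS a b" using assms by auto
  then show ?thesis using that by auto
qed

lemma Tab_max:
  assumes T: "T \<in> Tab a b" and "1 \<le> a + b"
  shows "T 1 a = a + b \<or> T 2 b = a + b"
proof -
  obtain x y where xy: "(x,y) \<in> cellsS a b" "T x y = a + b"
    using Tab_surj[OF T, of "a+b"] assms(2) by auto
  show ?thesis
  proof (cases "x = 1")
    case True
    have "y = a"
    proof (rule ccontr)
      assume "y \<noteq> a"
      then have "y < a" "1 \<le> y" using xy(1) True unfolding cellsS_mem by auto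
      then have "T 1 y < T 1 (Suc y)" using Tab_D(3)[OF T] by auto
      moreover have "T 1 (Suc y) \<le> a + b" using Tab_val(2)[OF T, of 1 "Suc y"] \<open>y < a\<close> unfolding cellsS_mem by auto
      ultimately show False using xy(2) True by simp
    qed
    then show ?thesis using xy True by simp
  next
    case False
    then have x2: "x = 2" using xy(1) unfolding cellsS_mem by auto
    have "y = b"
    proof (rule ccontr)
      assume "y \<noteq> b"
      then have "y < b" "1 \<le> y" using xy(1) x2 unfolding cellsS_mem by auto
      then have "T 2 y < T 2 (Suc y)" using Tab_D(4)[OF T] by auto
      moreover have "T 2 (Suc y) \<le> a + b" using Tab_val(2)[OF T, of 2 "Suc y"] \<open>y < b\<close> unfolding cellsS_mem by auto
      ultimately show False using xy(2) x2 by simp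
    qed
    then show ?thesis using xy x2 by simp
  qed
qed

lemma finite_Tab: "finite (Tab a b)"
proof -
  define f :: "(nat\<Rightarrow>nat\<Rightarrow>nat) \<Rightarrow> (nat \<times> nat) \<Rightarrow> nat" where "f = (\<lambda>T. restrict (\<lambda>(x,y). T x y) (cellsS a b))"
  show ?thesis
  proof (rule inj_on_finite[of f "Tab a b" "PiE (cellsS a b) (\<lambda>_. {0..a+b})"])
    show "inj_on f (Tab a b)"
    proof (rule inj_onI)
      fix T T' assume T: "T \<in> Tab a b" and T': "T' \<in> Tab a b" and e: "f T = f T'"
      show "T = T'"
      proof (intro ext)
        fix x y
        show "T x y = T' x y"
        proof (cases "(x,y) \<in> cellsS a b")
          case True
          from e have "f T (x,y) = f T' (x,y)" by simp
          then show ?thesis using True by (simp add: f_def)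
        next
          case False
          then show ?thesis using Tab_D(2)[OF T] Tab_D(2)[OF T'] by simp
        qed
      qed
    qed
    show "f ` Tab a b \<subseteq> PiE (cellsS a b) (\<lambda>_. {0..a+b})"
      using Tab_val by (fastforce simp: PiE_def extensional_def f_def)
    show "finite (PiE (cellsS a b) (\<lambda>_. {0..a+b}))"
      by (intro finite_PiE finite_cellsS) auto
  qed
qed

lemma Tab_00: "Tab 0 0 = {\<lambda>x y. 0}"
proof -
  have c: "cellsS 0 0 = {}" unfolding cellsS_def by auto
  show ?thesis unfolding Tab_def c by (auto simp: fun_eq_iff bij_betw_def)
qed



lemma cellsS_ins1: "1 \<le> a \<Longrightarrow> cellsS a b = cellsS (a - 1) b \<union> {(1, a)}"
  unfolding cellsS_def by auto
lemma cellsS_ins2: "1 \<le> b \<Longrightarrow> cellsS a b = cellsS a (b - 1) \<union> {(2, b)}"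
  unfolding cellsS_def by auto
lemma ivl_ins: "1 \<le> n \<Longrightarrow> {1..n} = {1..n - 1} \<union> {n::nat}"
  by auto

lemma setv_apply: "setv T x0 y0 v x y = (if x = x0 \<and> y = y0 then v else T x y)"
  unfolding setv_def by simp

lemma bij_setv:
  assumes "(x0,y0) \<notin> C" "v \<notin> V"
  shows "bij_betw (\<lambda>(x,y). setv T x0 y0 v x y) (C \<union> {(x0,y0)}) (V \<union> {v}) \<longleftrightarrow>
         bij_betw (\<lambda>(x,y). T x y) C V"
proof -
  have "bij_betw (\<lambda>(x,y). setv T x0 y0 v x y) (C \<union> {(x0,y0)}) (V \<union> {v}) \<longleftrightarrow>
        bij_betw (\<lambda>(x,y). setv T x0 y0 v x y) C V"
    using notIn_Un_bij_betw3[of "(x0,y0)" C "\<lambda>(x,y). setv T x0 y0 v x y" V] assms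
    by (simp add: setv_apply)
  also have "\<dots> \<longleftrightarrow> bij_betw (\<lambda>(x,y). T x y) C V"
    using assms(1) by (intro bij_betw_cong) (auto simp: setv_apply)
  finally show ?thesis .
qed

lemma ext1_in:
  assumes T: "T \<in> Tab (a - 1) b" and a: "1 \<le> a" "b < a"
  shows "setv T 1 a (a + b) \<in> Tab a b"
proof -
  have nc: "(1, a) \<notin> cellsS (a - 1) b" unfolding cellsS_mem by auto
  have nv: "a + b \<notin> {1..a + b - 1}" by auto
  have I: "{1..a+b} = {1..a+b-1} \<union> {a+b}" and I2: "a - 1 + b = a + b - 1" using a by auto
  have bij: "bij_betw (\<lambda>(x,y). setv T 1 a (a + b) x y) (cellsS a b) {1..a+b}"
    unfolding cellsS_ins1[OF a(1)] I bij_setv[OF nc nv] using Tab_D(1)[OF T] unfolding I2 .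
  have z: "\<forall>x y. (x,y) \<notin> cellsS a b \<longrightarrow> setv T 1 a (a + b) x y = 0"
  proof (intro allI impI)
    fix x y assume h: "(x,y) \<notin> cellsS a b"
    then have "\<not> (x = 1 \<and> y = a)" "(x,y) \<notin> cellsS (a - 1) b" using a unfolding cellsS_mem by auto
    then show "setv T 1 a (a + b) x y = 0" by (auto simp: setv_apply Tab_D(2)[OF T])
  qed
  have r1: "\<forall>c. 1 \<le> c \<longrightarrow> c < a \<longrightarrow> setv T 1 a (a + b) 1 c < setv T 1 a (a + b) 1 (Suc c)"
  proof (intro allI impI)
    fix c assume c: "1 \<le> c" "c < a"
    show "setv T 1 a (a + b) 1 c < setv T 1 a (a + b) 1 (Suc c)"
    proof (cases "Suc c = a")
      case True
      have "T 1 c \<le> a - 1 + b" using Tab_val(2)[OF T, of 1 c] c unfolding cellsS_mem by auto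
      then show ?thesis using True c a by (simp add: setv_apply)
    next
      case False
      then show ?thesis using Tab_D(3)[OF T, of c] c by (simp add: setv_apply)
    qed
  qed
  have r2: "\<forall>c. 1 \<le> c \<longrightarrow> c < b \<longrightarrow> setv T 1 a (a + b) 2 c < setv T 1 a (a + b) 2 (Suc c)"
    using Tab_D(4)[OF T] by (simp add: setv_apply)
  have col: "\<forall>c. 1 \<le> c \<longrightarrow> c \<le> b \<longrightarrow> setv T 1 a (a + b) 1 c < setv T 1 a (a + b) 2 c"
    using Tab_D(5)[OF T] a by (simp add: setv_apply)
  show ?thesis unfolding Tab_def using bij z r1 r2 col by blast
qed

lemma rem1_in:
  assumes T: "T \<in> Tab a b" and m: "T 1 a = a + b" and a: "1 \<le> a" "b < a"
  shows "setv T 1 a 0 \<in> Tab (a - 1) b"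
proof -
  have nc: "(1, a) \<notin> cellsS (a - 1) b" unfolding cellsS_mem by auto
  have nv: "a + b \<notin> {1..a + b - 1}" by auto
  have e: "setv (setv T 1 a 0) 1 a (a + b) = T" using m by (auto simp: setv_apply fun_eq_iff)
  have I: "{1..a+b} = {1..a+b-1} \<union> {a+b}" using a by auto
  have "bij_betw (\<lambda>(x,y). T x y) (cellsS (a - 1) b \<union> {(1,a)}) ({1..a+b-1} \<union> {a+b})"
    using Tab_D(1)[OF T] by (simp only: cellsS_ins1[OF a(1)] I)
  then have "bij_betw (\<lambda>(x,y). setv (setv T 1 a 0) 1 a (a + b) x y) (cellsS (a - 1) b \<union> {(1,a)}) ({1..a+b-1} \<union> {a+b})"
    by (simp only: e)
  then have bij: "bij_betw (\<lambda>(x,y). setv T 1 a 0 x y) (cellsS (a - 1) b) {1..a - 1 + b}"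
    unfolding bij_setv[OF nc nv] using a by simp
  have z: "\<forall>x y. (x,y) \<notin> cellsS (a - 1) b \<longrightarrow> setv T 1 a 0 x y = 0"
  proof (intro allI impI)
    fix x y assume h: "(x,y) \<notin> cellsS (a - 1) b"
    show "setv T 1 a 0 x y = 0"
    proof (cases "x = 1 \<and> y = a")
      case False
      then have "(x,y) \<notin> cellsS a b" using h a unfolding cellsS_mem by auto
      then show ?thesis using False by (simp add: setv_apply Tab_D(2)[OF T])
    qed (simp add: setv_apply)
  qed
  have r1: "\<forall>c. 1 \<le> c \<longrightarrow> c < a - 1 \<longrightarrow> setv T 1 a 0 1 c < setv T 1 a 0 1 (Suc c)"
  proof (intro allI impI)
    fix c assume "1 \<le> c" "c < a - 1"
    then show "setv T 1 a 0 1 c < setv T 1 a 0 1 (Suc c)" using Tab_D(3)[OF T, of c] by (auto simp: setv_apply)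
  qed
  have r2: "\<forall>c. 1 \<le> c \<longrightarrow> c < b \<longrightarrow> setv T 1 a 0 2 c < setv T 1 a 0 2 (Suc c)"
    using Tab_D(4)[OF T] by (simp add: setv_apply)
  have col: "\<forall>c. 1 \<le> c \<longrightarrow> c \<le> b \<longrightarrow> setv T 1 a 0 1 c < setv T 1 a 0 2 c"
    using Tab_D(5)[OF T] a by (simp add: setv_apply)
  show ?thesis unfolding Tab_def using bij z r1 r2 col by blast
qed

lemma ext2_in:
  assumes T: "T \<in> Tab a (b - 1)" and b: "1 \<le> b" "b \<le> a"
  shows "setv T 2 b (a + b) \<in> Tab a b"
proof -
  have nc: "(2, b) \<notin> cellsS a (b - 1)" unfolding cellsS_mem by auto
  have nv: "a + b \<notin> {1..a + b - 1}" by auto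
  have I: "{1..a+b} = {1..a+b-1} \<union> {a+b}" and I2: "a + (b - 1) = a + b - 1" using b by auto
  have bij: "bij_betw (\<lambda>(x,y). setv T 2 b (a + b) x y) (cellsS a b) {1..a+b}"
    unfolding cellsS_ins2[OF b(1)] I bij_setv[OF nc nv] using Tab_D(1)[OF T] unfolding I2 .
  have z: "\<forall>x y. (x,y) \<notin> cellsS a b \<longrightarrow> setv T 2 b (a + b) x y = 0"
  proof (intro allI impI)
    fix x y assume h: "(x,y) \<notin> cellsS a b"
    then have "\<not> (x = 2 \<and> y = b)" "(x,y) \<notin> cellsS a (b - 1)" using b unfolding cellsS_mem by auto
    then show "setv T 2 b (a + b) x y = 0" by (auto simp: setv_apply Tab_D(2)[OF T])
  qed
  have r1: "\<forall>c. 1 \<le> c \<longrightarrow> c < a \<longrightarrow> setv T 2 b (a + b) 1 c < setv T 2 b (a + b) 1 (Suc c)"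
    using Tab_D(3)[OF T] by (simp add: setv_apply)
  have r2: "\<forall>c. 1 \<le> c \<longrightarrow> c < b \<longrightarrow> setv T 2 b (a + b) 2 c < setv T 2 b (a + b) 2 (Suc c)"
  proof (intro allI impI)
    fix c assume c: "1 \<le> c" "c < b"
    show "setv T 2 b (a + b) 2 c < setv T 2 b (a + b) 2 (Suc c)"
    proof (cases "Suc c = b")
      case True
      have "T 2 c \<le> a + (b - 1)" using Tab_val(2)[OF T, of 2 c] c unfolding cellsS_mem by auto
      then show ?thesis using True c b by (simp add: setv_apply)
    next
      case False
      then show ?thesis using Tab_D(4)[OF T, of c] c by (simp add: setv_apply)
    qed
  qed
  have col: "\<forall>c. 1 \<le> c \<longrightarrow> c \<le> b \<longrightarrow> setv T 2 b (a + b) 1 c < setv T 2 b (a + b) 2 c"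
  proof (intro allI impI)
    fix c assume c: "1 \<le> c" "c \<le> b"
    show "setv T 2 b (a + b) 1 c < setv T 2 b (a + b) 2 c"
    proof (cases "c = b")
      case True
      have "T 1 c \<le> a + (b - 1)" using Tab_val(2)[OF T, of 1 c] c b unfolding cellsS_mem by auto
      then show ?thesis using True c b by (simp add: setv_apply)
    next
      case False
      then show ?thesis using Tab_D(5)[OF T, of c] c by (simp add: setv_apply)
    qed
  qed
  show ?thesis unfolding Tab_def using bij z r1 r2 col by blast
qed

lemma rem2_in:
  assumes T: "T \<in> Tab a b" and m: "T 2 b = a + b" and b: "1 \<le> b" "b \<le> a"
  shows "setv T 2 b 0 \<in> Tab a (b - 1)"
proof -
  have nc: "(2, b) \<notin> cellsS a (b - 1)" unfolding cellsS_mem by auto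
  have nv: "a + b \<notin> {1..a + b - 1}" by auto
  have e: "setv (setv T 2 b 0) 2 b (a + b) = T" using m by (auto simp: setv_apply fun_eq_iff)
  have I: "{1..a+b} = {1..a+b-1} \<union> {a+b}" using b by auto
  have "bij_betw (\<lambda>(x,y). T x y) (cellsS a (b - 1) \<union> {(2,b)}) ({1..a+b-1} \<union> {a+b})"
    using Tab_D(1)[OF T] by (simp only: cellsS_ins2[OF b(1)] I)
  then have "bij_betw (\<lambda>(x,y). setv (setv T 2 b 0) 2 b (a + b) x y) (cellsS a (b - 1) \<union> {(2,b)}) ({1..a+b-1} \<union> {a+b})"
    by (simp only: e)
  then have bij: "bij_betw (\<lambda>(x,y). setv T 2 b 0 x y) (cellsS a (b - 1)) {1..a + (b - 1)}"
    unfolding bij_setv[OF nc nv] using b by simp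
  have z: "\<forall>x y. (x,y) \<notin> cellsS a (b - 1) \<longrightarrow> setv T 2 b 0 x y = 0"
  proof (intro allI impI)
    fix x y assume h: "(x,y) \<notin> cellsS a (b - 1)"
    show "setv T 2 b 0 x y = 0"
    proof (cases "x = 2 \<and> y = b")
      case False
      then have "(x,y) \<notin> cellsS a b" using h b unfolding cellsS_mem by auto
      then show ?thesis using False by (simp add: setv_apply Tab_D(2)[OF T])
    qed (simp add: setv_apply)
  qed
  have r1: "\<forall>c. 1 \<le> c \<longrightarrow> c < a \<longrightarrow> setv T 2 b 0 1 c < setv T 2 b 0 1 (Suc c)"
    using Tab_D(3)[OF T] by (simp add: setv_apply)
  have r2: "\<forall>c. 1 \<le> c \<longrightarrow> c < b - 1 \<longrightarrow> setv T 2 b 0 2 c < setv T 2 b 0 2 (Suc c)"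
  proof (intro allI impI)
    fix c assume "1 \<le> c" "c < b - 1"
    then show "setv T 2 b 0 2 c < setv T 2 b 0 2 (Suc c)" using Tab_D(4)[OF T, of c] by (auto simp: setv_apply)
  qed
  have col: "\<forall>c. 1 \<le> c \<longrightarrow> c \<le> b - 1 \<longrightarrow> setv T 2 b 0 1 c < setv T 2 b 0 2 c"
    using Tab_D(5)[OF T] b by (simp add: setv_apply)
  show ?thesis unfolding Tab_def using bij z r1 r2 col by blast
qed


lemma setv_setv: "setv (setv T x y u) x y v = setv T x y v"
  by (auto simp: setv_apply fun_eq_iff)
lemma setv_id: "T x y = v \<Longrightarrow> setv T x y v = T"
  by (auto simp: setv_apply fun_eq_iff)

lemma card_S1:
  assumes a: "1 \<le> a" "b < a"
  shows "card {T \<in> Tab a b. T 1 a = a + b \<and> Q T} = card {T \<in> Tab (a - 1) b. Q (setv T 1 a (a + b))}"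
proof -
  have "bij_betw (\<lambda>T. setv T 1 a (a + b)) {T \<in> Tab (a - 1) b. Q (setv T 1 a (a + b))} {T \<in> Tab a b. T 1 a = a + b \<and> Q T}"
  proof (rule bij_betw_byWitness[where f' = "\<lambda>T. setv T 1 a 0"])
    show "\<forall>T\<in>{T \<in> Tab (a - 1) b. Q (setv T 1 a (a + b))}. setv (setv T 1 a (a + b)) 1 a 0 = T"
    proof
      fix T assume "T \<in> {T \<in> Tab (a - 1) b. Q (setv T 1 a (a + b))}"
      then have "T 1 a = 0" using Tab_D(2)[of T "a - 1" b 1 a] a unfolding cellsS_mem by auto
      then show "setv (setv T 1 a (a + b)) 1 a 0 = T" by (simp add: setv_setv setv_id)
    qed
    show "\<forall>T\<in>{T \<in> Tab a b. T 1 a = a + b \<and> Q T}. setv (setv T 1 a 0) 1 a (a + b) = T"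
      by (auto simp: setv_setv setv_id)
    show "(\<lambda>T. setv T 1 a (a + b)) ` {T \<in> Tab (a - 1) b. Q (setv T 1 a (a + b))} \<subseteq> {T \<in> Tab a b. T 1 a = a + b \<and> Q T}"
      using ext1_in[OF _ a] by (auto simp: setv_apply)
    show "(\<lambda>T. setv T 1 a 0) ` {T \<in> Tab a b. T 1 a = a + b \<and> Q T} \<subseteq> {T \<in> Tab (a - 1) b. Q (setv T 1 a (a + b))}"
      using rem1_in[OF _ _ a] by (auto simp: setv_setv setv_id)
  qed
  then show ?thesis by (simp add: bij_betw_same_card)
qed

lemma card_S2:
  assumes b: "1 \<le> b" "b \<le> a"
  shows "card {T \<in> Tab a b. T 2 b = a + b \<and> Q T} = card {T \<in> Tab a (b - 1). Q (setv T 2 b (a + b))}"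
proof -
  have "bij_betw (\<lambda>T. setv T 2 b (a + b)) {T \<in> Tab a (b - 1). Q (setv T 2 b (a + b))} {T \<in> Tab a b. T 2 b = a + b \<and> Q T}"
  proof (rule bij_betw_byWitness[where f' = "\<lambda>T. setv T 2 b 0"])
    show "\<forall>T\<in>{T \<in> Tab a (b - 1). Q (setv T 2 b (a + b))}. setv (setv T 2 b (a + b)) 2 b 0 = T"
    proof
      fix T assume "T \<in> {T \<in> Tab a (b - 1). Q (setv T 2 b (a + b))}"
      then have "T 2 b = 0" using Tab_D(2)[of T a "b - 1" 2 b] b unfolding cellsS_mem by auto
      then show "setv (setv T 2 b (a + b)) 2 b 0 = T" by (simp add: setv_setv setv_id)
    qed
    show "\<forall>T\<in>{T \<in> Tab a b. T 2 b = a + b \<and> Q T}. setv (setv T 2 b 0) 2 b (a + b) = T"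
      by (auto simp: setv_setv setv_id)
    show "(\<lambda>T. setv T 2 b (a + b)) ` {T \<in> Tab a (b - 1). Q (setv T 2 b (a + b))} \<subseteq> {T \<in> Tab a b. T 2 b = a + b \<and> Q T}"
      using ext2_in[OF _ b] by (auto simp: setv_apply)
    show "(\<lambda>T. setv T 2 b 0) ` {T \<in> Tab a b. T 2 b = a + b \<and> Q T} \<subseteq> {T \<in> Tab a (b - 1). Q (setv T 2 b (a + b))}"
      using rem2_in[OF _ _ b] by (auto simp: setv_setv setv_id)
  qed
  then show ?thesis by (simp add: bij_betw_same_card)
qed

lemma card_rec:
  assumes ba: "b \<le> a" and pos: "1 \<le> a + b"
  shows "card {T \<in> Tab a b. Q T} =
    (if b < a then card {T \<in> Tab (a - 1) b. Q (setv T 1 a (a + b))} else 0) +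
    (if 1 \<le> b then card {T \<in> Tab a (b - 1). Q (setv T 2 b (a + b))} else 0)"
proof -
  let ?S1 = "{T \<in> Tab a b. T 1 a = a + b \<and> Q T}"
  let ?S2 = "{T \<in> Tab a b. T 2 b = a + b \<and> Q T}"
  have un: "{T \<in> Tab a b. Q T} = ?S1 \<union> ?S2" using Tab_max[OF _ pos] by blast
  have dis: "?S1 \<inter> ?S2 = {}"
  proof (rule ccontr)
    assume "?S1 \<inter> ?S2 \<noteq> {}"
    then obtain T where T: "T \<in> Tab a b" "T 1 a = a + b" "T 2 b = a + b" by blast
    have c1: "(1, a) \<in> cellsS a b"
    proof (rule ccontr)
      assume "(1, a) \<notin> cellsS a b" then have "T 1 a = 0" using Tab_D(2)[OF T(1)] by blast
      then show False using T(2) pos by simp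
    qed
    have c2: "(2, b) \<in> cellsS a b"
    proof (rule ccontr)
      assume "(2, b) \<notin> cellsS a b" then have "T 2 b = 0" using Tab_D(2)[OF T(1)] by blast
      then show False using T(3) pos by simp
    qed
    show False using Tab_inj[OF T(1) c1 c2] T(2,3) by simp
  qed
  have fin: "finite ?S1" "finite ?S2" using finite_Tab by auto
  have e1: "card ?S1 = (if b < a then card {T \<in> Tab (a - 1) b. Q (setv T 1 a (a + b))} else 0)"
  proof (cases "b < a")
    case True
    then show ?thesis using card_S1[of a b Q] by simp
  next
    case False
    then have ab: "a = b" "1 \<le> a" using ba pos by auto
    have "?S1 = {}"
    proof (rule ccontr)
      assume "?S1 \<noteq> {}"
      then obtain T where T: "T \<in> Tab a b" "T 1 a = a + b" by blast
      have "T 1 a < T 2 a" using Tab_D(5)[OF T(1), of a] ab by simp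
      moreover have "T 2 a \<le> a + b" using Tab_val(2)[OF T(1), of 2 a] ab unfolding cellsS_mem by simp
      ultimately show False using T(2) by simp
    qed
    then have "card ?S1 = 0" by (metis card.empty)
    with False show ?thesis by simp
  qed
  have e2: "card ?S2 = (if 1 \<le> b then card {T \<in> Tab a (b - 1). Q (setv T 2 b (a + b))} else 0)"
  proof (cases "1 \<le> b")
    case True
    then show ?thesis using card_S2[of b a Q] ba by simp
  next
    case False
    have "?S2 = {}"
    proof (rule ccontr)
      assume "?S2 \<noteq> {}"
      then obtain T where T: "T \<in> Tab a b" "T 2 b = a + b" by blast
      have "T 2 b = 0" using Tab_D(2)[OF T(1), of 2 b] False unfolding cellsS_mem by simp
      then show False using T(2) pos by simp
    qed
    then have "card ?S2 = 0" by (metis card.empty)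
    with False show ?thesis by simp
  qed
  show ?thesis unfolding un card_Un_disjoint[OF fin dis] e1 e2 ..
qed

lemma card_Tab00: "card (Tab 0 0) = 1"
  unfolding Tab_00 by simp

definition binz :: "nat \<Rightarrow> int \<Rightarrow> real" where
  "binz m k = (if k < 0 then 0 else real (m choose nat k))"

definition Qz :: "nat \<Rightarrow> nat \<Rightarrow> int \<Rightarrow> nat \<Rightarrow> real" where
  "Qz i j a m = binz m (a - int i) - binz m (a + 1 - int j)"

definition bal :: "nat \<Rightarrow> nat \<Rightarrow> real" where
  "bal a b = real ((a + b) choose b) * (real a + 1 - real b) / (real a + 1)"

lemma binz_Suc: "binz (Suc m) k = binz m k + binz m (k - 1)"
proof (cases "k < 0")
  case True then show ?thesis by (simp add: binz_def)
next
  case False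
  show ?thesis
  proof (cases "k = 0")
    case True then show ?thesis by (simp add: binz_def)
  next
    case False2: False
    then have "nat k = Suc (nat (k - 1))" using False by simp
    then show ?thesis using False False2 by (simp add: binz_def)
  qed
qed

lemma binz_big: "k > int m \<Longrightarrow> binz m k = 0"
  unfolding binz_def by (simp add: binomial_eq_0)

lemma binz_sym: "0 \<le> k \<Longrightarrow> k \<le> int m \<Longrightarrow> binz m k = binz m (int m - k)"
  unfolding binz_def using binomial_symmetric[of "nat k" m] by (simp add: nat_diff_distrib)

lemma binz_0: "binz 0 k = (if k = 0 then 1 else 0)"
  unfolding binz_def by auto

lemma Qz_Suc: "Qz i j a (Suc m) = Qz i j a m + Qz i j (a - 1) m"
  unfolding Qz_def binz_Suc by (simp add: algebra_simps)

lemma choose_pred1: "1 \<le> n \<Longrightarrow> real ((n - 1) choose b) = real (n choose b) * (real n - real b) / real n"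
proof -
  assume n: "1 \<le> n"
  have "(n - b) * (n choose b) = n * ((n - 1) choose b)" by (rule binomial_absorb_comp)
  then have "real (n - b) * real (n choose b) = real n * real ((n - 1) choose b)"
    by (metis of_nat_mult)
  moreover have "real (n - b) = real n - real b" if "b \<le> n" using that by simp
  moreover have "b > n \<Longrightarrow> (n - 1) choose b = 0" by (simp add: binomial_eq_0)
  ultimately show ?thesis using n
    by (cases "b \<le> n") (auto simp: field_simps binomial_eq_0)
qed

lemma choose_pred2: "1 \<le> b \<Longrightarrow> 1 \<le> n \<Longrightarrow> real ((n - 1) choose (b - 1)) = real (n choose b) * real b / real n"
proof -
  assume b: "1 \<le> b" and n: "1 \<le> n"
  have "b * (n choose b) = n * ((n - 1) choose (b - 1))" using b by (simp add: times_binomial_minus1_eq)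
  then have "real b * real (n choose b) = real n * real ((n - 1) choose (b - 1))" by (metis of_nat_mult)
  then show ?thesis using n by (simp add: field_simps)
qed

lemma aux1: "(x::real) \<noteq> 0 \<Longrightarrow> x + y \<noteq> 0 \<Longrightarrow> c * (x + y - y) / (x + y) * (x - y) / x = c * (x - y) / (x + y)"
proof -
  assume h: "x \<noteq> 0" "x + y \<noteq> 0"
  have "c * (x + y - y) / (x + y) * (x - y) / x = (c * (x - y) * x) / ((x + y) * x)" by (simp add: ac_simps)
  also have "\<dots> = c * (x - y) / (x + y)" using h by simp
  finally show ?thesis .
qed
lemma frac_comb: "(DD::real) \<noteq> 0 \<Longrightarrow> EE \<noteq> 0 \<Longrightarrow> u / DD + v / DD * w / EE = (u * EE + v * w) / (DD * EE)"
  by (simp add: field_simps)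
lemma aux2: "(x::real) \<ge> 0 \<Longrightarrow> x + y > 0 \<Longrightarrow> y \<ge> 0 \<Longrightarrow>
   c * (x + 1 - y) / (x + 1) = c * (x - y) / (x + y) + c * y / (x + y) * (x - y + 2) / (x + 1)"
proof -
  assume h: "x \<ge> 0" "x + y > 0" "y \<ge> 0"
  have n1: "x + y \<noteq> 0" "x + 1 \<noteq> 0" using h by auto
  have "c * (x - y) / (x + y) + c * y / (x + y) * (x - y + 2) / (x + 1)
     = (c * (x - y) * (x + 1) + c * y * (x - y + 2)) / ((x + y) * (x + 1))"
    by (rule frac_comb[OF n1])
  also have "c * (x - y) * (x + 1) + c * y * (x - y + 2) = (c * (x + 1 - y)) * (x + y)" by algebra
  also have "(c * (x + 1 - y)) * (x + y) / ((x + y) * (x + 1)) = c * (x + 1 - y) / (x + 1)"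
    using n1 by simp
  finally show ?thesis by simp
qed
lemma bal_rec:
  assumes ba: "b \<le> a" and pos: "1 \<le> a + b"
  shows "bal a b = (if b < a then bal (a - 1) b else 0) + (if 1 \<le> b then bal a (b - 1) else 0)"
proof -
  have a1: "1 \<le> a" using ba pos by simp
  define n where "n = a + b"
  have n1: "1 \<le> n" using pos n_def by simp
  have rn: "real n = real a + real b" unfolding n_def by simp
  have t1: "bal (a - 1) b = real (n choose b) * (real a - real b) / real n"
  proof -
    have "bal (a - 1) b = real ((n - 1) choose b) * (real (a - 1) + 1 - real b) / (real (a - 1) + 1)"
      unfolding bal_def n_def using a1 by (simp add: algebra_simps)
    also have "\<dots> = real (n choose b) * (real n - real b) / real n * (real a - real b) / real a"
      unfolding choose_pred1[OF n1] using a1 by (simp add: of_nat_diff)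
    also have "\<dots> = real (n choose b) * (real a - real b) / real n"
    proof -
      have x: "real a \<noteq> 0" "real a + real b \<noteq> 0" using a1 by auto
      show ?thesis unfolding rn using aux1[OF x, of "real (n choose b)"] by simp
    qed
    finally show ?thesis .
  qed
  have t2: "1 \<le> b \<Longrightarrow> bal a (b - 1) = real (n choose b) * real b / real n * (real a - real b + 2) / (real a + 1)"
  proof -
    assume b1: "1 \<le> b"
    have "bal a (b - 1) = real ((n - 1) choose (b - 1)) * (real a + 1 - real (b - 1)) / (real a + 1)"
      unfolding bal_def n_def using b1 by (simp add: algebra_simps)
    also have "\<dots> = real (n choose b) * real b / real n * (real a - real b + 2) / (real a + 1)"
      unfolding choose_pred2[OF b1 n1] using b1 by (simp add: of_nat_diff algebra_simps)
    finally show ?thesis .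
  qed
  have t0: "bal a b = real (n choose b) * (real a + 1 - real b) / (real a + 1)"
    unfolding bal_def n_def ..
  have np: "real n > 0" using n1 by simp
  show ?thesis
  proof (cases "1 \<le> b")
    case True
    have "bal a b = real (n choose b) * (real a - real b) / real n + bal a (b - 1)"
      unfolding t0 t2[OF True] t1[symmetric] unfolding t1 rn by (rule aux2) (use np rn in auto)
    moreover have "b = a \<Longrightarrow> real (n choose b) * (real a - real b) / real n = 0" by simp
    ultimately show ?thesis using True ba t1 by auto
  next
    case False
    then have "b = 0" by simp
    then show ?thesis using a1 by (simp add: bal_def)
  qed
qed


lemma card_Tab: "b \<le> a \<Longrightarrow> real (card (Tab a b)) = bal a b"
proof (induction "a + b" arbitrary: a b rule: less_induct)
  case less
  show ?case
  proof (cases "a + b = 0")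
    case True
    then have "a = 0" "b = 0" by auto
    then show ?thesis using card_Tab00 by (simp add: bal_def)
  next
    case False
    then have pos: "1 \<le> a + b" by linarith
    have r: "card (Tab a b) = (if b < a then card (Tab (a - 1) b) else 0) + (if 1 \<le> b then card (Tab a (b - 1)) else 0)"
      using card_rec[OF less.prems pos, of "\<lambda>_. True"] by simp
    have ih1: "b < a \<Longrightarrow> real (card (Tab (a - 1) b)) = bal (a - 1) b"
      using less.hyps[of "a - 1" b] by simp
    have ih2: "1 \<le> b \<Longrightarrow> real (card (Tab a (b - 1))) = bal a (b - 1)"
      using less.hyps[of a "b - 1"] less.prems by simp
    show ?thesis unfolding r bal_rec[OF less.prems pos] using ih1 ih2 by simp
  qed
qed

lemma Qz_B0: "a = m + i + j + 1 \<Longrightarrow> Qz i j (int a) m = 0"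
  unfolding Qz_def by (simp add: binz_big)

lemma Qz_Ba: "2 * a = m + i + j + 1 \<Longrightarrow> Qz i j (int a - 1) m = 0"
proof -
  assume h: "2 * a = m + i + j + 1"
  define k where "k = int a - 1 - int i"
  have e: "int a - 1 + 1 - int j = int m - k" unfolding k_def using h by simp
  have "binz m k = binz m (int m - k)"
  proof (cases "k < 0")
    case True
    then show ?thesis by (simp add: binz_def binz_big)
  next
    case False
    show ?thesis
    proof (cases "k \<le> int m")
      case True then show ?thesis using False binz_sym[of k m] by simp
    next
      case False2: False
      then show ?thesis by (simp add: binz_def binz_big)
    qed
  qed
  then show ?thesis unfolding Qz_def e unfolding k_def by simp
qed

lemma card_K:
  assumes ij: "j < i"
  shows "b \<le> a \<Longrightarrow> i + j \<le> a + b \<Longrightarrow>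
    real (card {T \<in> Tab a b. T 1 i = i + j}) = bal (i - 1) j * Qz i j (int a) (a + b - (i + j))"
proof (induction "a + b" arbitrary: a b rule: less_induct)
  case less
  have r1: "1 \<le> i + j" using ij by simp
  have pos: "1 \<le> a + b" using less.prems r1 by simp
  have a1: "1 \<le> a" using pos less.prems by simp
  have rec: "card {T \<in> Tab a b. T 1 i = i + j} =
    (if b < a then card {T \<in> Tab (a - 1) b. setv T 1 a (a + b) 1 i = i + j} else 0) +
    (if 1 \<le> b then card {T \<in> Tab a (b - 1). setv T 2 b (a + b) 1 i = i + j} else 0)"
    by (rule card_rec[OF less.prems(1) pos])
  have sv2: "\<And>T. setv T 2 b (a + b) 1 i = T 1 i" by (simp add: setv_apply)
  have sv1: "\<And>T. setv T 1 a (a + b) 1 i = (if i = a then a + b else T 1 i)" by (simp add: setv_apply)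
  show ?case
  proof (cases "a + b = i + j")
    case True
    have small: "\<And>T a' b'. T \<in> Tab a' b' \<Longrightarrow> a' + b' < i + j \<Longrightarrow> T 1 i \<noteq> i + j"
    proof -
      fix T a' b' assume T: "T \<in> Tab a' b'" and lt: "a' + b' < i + j"
      show "T 1 i \<noteq> i + j"
      proof (cases "(1, i) \<in> cellsS a' b'")
        case True then show ?thesis using Tab_val(2)[OF T True] lt by simp
      next
        case False then show ?thesis using Tab_D(2)[OF T False] r1 by auto
      qed
    qed
    have s2: "{T \<in> Tab a (b - 1). setv T 2 b (a + b) 1 i = i + j} = {}" if "1 \<le> b"
      unfolding sv2 using small[of _ a "b - 1"] True that by auto
    have s1: "{T \<in> Tab (a - 1) b. setv T 1 a (a + b) 1 i = i + j} = (if i = a then Tab (a - 1) b else {})"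
      unfolding sv1 using small[of _ "a - 1" b] True a1 by auto
    have c2: "(if 1 \<le> b then card {T \<in> Tab a (b - 1). setv T 2 b (a + b) 1 i = i + j} else 0) = 0"
    proof (cases "1 \<le> b")
      case True then show ?thesis using s2[OF True] by (metis card.empty)
    qed simp
    have c: "real (card {T \<in> Tab a b. T 1 i = i + j}) = (if b < a \<and> i = a then bal (a - 1) b else 0)"
      unfolding rec s1 c2 using card_Tab[of b "a - 1"] by auto
    have Q: "Qz i j (int a) (a + b - (i + j)) = (if a = i then 1 else 0)"
    proof -
      have "int a + 1 - int j \<noteq> 0" using less.prems True ij by linarith
      moreover have "a + b - (i + j) = 0" using True by simp
      ultimately show ?thesis unfolding Qz_def by (simp add: binz_0)
    qed
    show ?thesis
    proof (cases "a = i")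
      case True2: True
      then have "b = j" "b < a" using True ij by auto
      then show ?thesis unfolding c Q using True2 by simp
    next
      case False
      then show ?thesis unfolding c Q by simp
    qed
  next
    case False
    then have gt: "i + j < a + b" using less.prems by simp
    define m where "m = a + b - 1 - (i + j)"
    have mS: "a + b - (i + j) = Suc m" unfolding m_def using gt by simp
    have s1: "{T \<in> Tab (a - 1) b. setv T 1 a (a + b) 1 i = i + j} = {T \<in> Tab (a - 1) b. T 1 i = i + j}"
    proof -
      have nc: "(1, a) \<notin> cellsS (a - 1) b" using a1 unfolding cellsS_mem by simp
      have z: "\<And>T. T \<in> Tab (a - 1) b \<Longrightarrow> T 1 a = 0"
        using Tab_D(2)[OF _ nc] by blast
      show ?thesis unfolding sv1
      proof (intro Collect_cong conj_cong refl)
        fix T assume "T \<in> Tab (a - 1) b"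
        then show "((if i = a then a + b else T 1 i) = i + j) = (T 1 i = i + j)"
          using z[of T] gt r1 by auto
      qed
    qed
    have ih1: "b < a \<Longrightarrow> real (card {T \<in> Tab (a - 1) b. T 1 i = i + j}) = bal (i - 1) j * Qz i j (int a - 1) m"
      using less.hyps[of "a - 1" b] gt a1 unfolding m_def by (simp add: of_nat_diff)
    have ih2: "1 \<le> b \<Longrightarrow> real (card {T \<in> Tab a (b - 1). T 1 i = i + j}) = bal (i - 1) j * Qz i j (int a) m"
      using less.hyps[of a "b - 1"] gt less.prems unfolding m_def by simp
    have b0: "\<not> 1 \<le> b \<Longrightarrow> Qz i j (int a) m = 0"
      by (rule Qz_B0) (use gt m_def in simp)
    have ba: "\<not> b < a \<Longrightarrow> Qz i j (int a - 1) m = 0"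
      by (rule Qz_Ba) (use gt m_def less.prems in simp)
    have L: "real (card {T \<in> Tab a b. T 1 i = i + j}) =
       (if b < a then bal (i - 1) j * Qz i j (int a - 1) m else 0) + (if 1 \<le> b then bal (i - 1) j * Qz i j (int a) m else 0)"
      unfolding rec s1 sv2 using ih1 ih2 by simp
    show ?thesis unfolding L mS Qz_Suc
      by (cases "b < a"; cases "1 \<le> b") (simp_all add: b0 ba distrib_left)
  qed
qed


lemma ratio_lim: "(\<lambda>n. real ((2 * n - a - b) choose (n - a)) / real ((2 * n) choose n)) \<longlonglongrightarrow> 1 / 2 ^ (a + b)"
proof (induction a arbitrary: b)
  case 0
  show ?case
  proof (induction b)
    case 0
    have "(\<lambda>n. real ((2 * n - 0 - 0) choose (n - 0)) / real ((2 * n) choose n)) = (\<lambda>n. 1)"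
      by (simp add: fun_eq_iff)
    then show ?case by simp
  next
    case (Suc b)
    have lim: "(\<lambda>n. real ((2 * n - 0 - b) choose (n - 0)) / real ((2 * n) choose n) * ((real n - real b) / (2 * real n - real b)))
        \<longlonglongrightarrow> 1 / 2 ^ (0 + b) * (1 / 2)"
      by (intro tendsto_mult Suc) real_asymp
    have ev: "eventually (\<lambda>n. real ((2 * n - 0 - b) choose (n - 0)) / real ((2 * n) choose n) * ((real n - real b) / (2 * real n - real b))
        = real ((2 * n - 0 - Suc b) choose (n - 0)) / real ((2 * n) choose n)) sequentially"
    proof (rule eventually_sequentiallyI[of "Suc b"])
      fix n assume n: "Suc b \<le> n"
      define M where "M = 2 * n - b"
      have M1: "M - 1 = 2 * n - Suc b" "M - n = n - b" unfolding M_def by auto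
      have e: "(M - n) * (M choose n) = M * ((M - 1) choose n)" by (rule binomial_absorb_comp)
      have rM: "real M = 2 * real n - real b" "real (n - b) = real n - real b" unfolding M_def using n by auto
      have Mp: "real M > 0" using rM n by simp
      have "real ((M - 1) choose n) = real (M choose n) * (real n - real b) / real M"
        using arg_cong[OF e, of real] Mp unfolding M1 of_nat_mult rM(2) by (simp add: field_simps)
      then show "real ((2 * n - 0 - b) choose (n - 0)) / real ((2 * n) choose n) * ((real n - real b) / (2 * real n - real b))
        = real ((2 * n - 0 - Suc b) choose (n - 0)) / real ((2 * n) choose n)"
        unfolding M1(1)[symmetric] using rM(1) unfolding M_def by simp
    qed
    show ?case using Lim_transform_eventually[OF lim ev] by (simp add: field_simps)
  qed
next
  case (Suc a)
  have lim: "(\<lambda>n. real ((2 * n - a - b) choose (n - a)) / real ((2 * n) choose n) * ((real n - real a) / (2 * real n - real a - real b)))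
      \<longlonglongrightarrow> 1 / 2 ^ (a + b) * (1 / 2)"
    by (intro tendsto_mult Suc) real_asymp
  have ev: "eventually (\<lambda>n. real ((2 * n - a - b) choose (n - a)) / real ((2 * n) choose n) * ((real n - real a) / (2 * real n - real a - real b))
      = real ((2 * n - Suc a - b) choose (n - Suc a)) / real ((2 * n) choose n)) sequentially"
  proof (rule eventually_sequentiallyI[of "Suc (a + b)"])
    fix n assume n: "Suc (a + b) \<le> n"
    define M where "M = 2 * n - a - b"
    define k where "k = n - a"
    have M1: "M - 1 = 2 * n - Suc a - b" "k - 1 = n - Suc a" unfolding M_def k_def by auto
    have kp: "0 < k" unfolding k_def using n by simp
    have e: "k * (M choose k) = M * ((M - 1) choose (k - 1))" by (rule times_binomial_minus1_eq[OF kp])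
    have rM: "real M = 2 * real n - real a - real b" "real k = real n - real a" unfolding M_def k_def using n by auto
    have Mp: "real M > 0" using rM n by simp
    have "real ((M - 1) choose (k - 1)) = real (M choose k) * (real n - real a) / real M"
      using arg_cong[OF e, of real] Mp unfolding of_nat_mult rM(2) by (simp add: field_simps)
    then show "real ((2 * n - a - b) choose (n - a)) / real ((2 * n) choose n) * ((real n - real a) / (2 * real n - real a - real b))
      = real ((2 * n - Suc a - b) choose (n - Suc a)) / real ((2 * n) choose n)"
      unfolding M1[symmetric] using rM(1) unfolding M_def k_def by simp
  qed
  show ?case using Lim_transform_eventually[OF lim ev] by (simp add: field_simps)
qed


lemma choose_shift:
  assumes k: "1 \<le> k" "k \<le> M"
  shows "real (M choose (k - 1)) = real (M choose k) * real k / (real M - real k + 1)"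
proof -
  have e1: "k * (M choose k) = M * ((M - 1) choose (k - 1))" by (rule times_binomial_minus1_eq) (use k in simp)
  have e2: "(M - (k - 1)) * (M choose (k - 1)) = M * ((M - 1) choose (k - 1))" by (rule binomial_absorb_comp)
  have h0: "real (M - (k - 1)) * real (M choose (k - 1)) = real k * real (M choose k)"
    using e1 e2 by (metis of_nat_mult)
  have h1: "real (M - (k - 1)) = real M - real k + 1" using k by (simp add: of_nat_diff)
  have h: "real (M choose (k - 1)) * (real M - real k + 1) = real (M choose k) * real k"
    using h0 unfolding h1 by (simp only: mult.commute)
  have pos: "real M - real k + 1 \<noteq> 0" using k by simp
  show ?thesis using h pos by (simp add: eq_divide_eq)
qed

lemma binz_nat: "binz m (int k) = real (m choose k)"
  unfolding binz_def by simp

lemma frac_re: "(w::real) \<noteq> 0 \<Longrightarrow> z \<noteq> 0 \<Longrightarrow> v \<noteq> 0 \<Longrightarrow> B * (c * u / v) / (w / z) = B * u * (c / w) * (z / v)"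
  by (simp add: field_simps)

lemma prob_eq:
  assumes ij: "j < i" and n: "i + 1 \<le> n"
  shows "prob_entry n i (i + j) = bal (i - 1) j * (real i - real j + 1) *
           (real ((2 * n - i - j) choose (n - i)) / real ((2 * n) choose n)) * ((real n + 1) / (real n - real j + 1))"
proof -
  define M where "M = n + n - (i + j)"
  define k where "k = n - i"
  have k1: "1 \<le> k" "k \<le> M" unfolding k_def M_def using n ij by auto
  have K: "real (card {T \<in> SYT n. T 1 i = i + j}) = bal (i - 1) j * Qz i j (int n) M"
  proof -
    have h: "i + j \<le> n + n" using n ij by linarith
    show ?thesis using card_K[OF ij le_refl h] unfolding SYT_Tab M_def .
  qed
  have C: "real (card (SYT n)) = bal n n" unfolding SYT_Tab by (rule card_Tab) simp
  have q1: "binz M (int n - int i) = real (M choose k)"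
  proof -
    have "int n - int i = int k" unfolding k_def using n by simp
    then show ?thesis by (simp add: binz_nat)
  qed
  have q2: "binz M (int n + 1 - int j) = real (M choose (k - 1))"
  proof -
    have e: "int n + 1 - int j = int (n + 1 - j)" using ij n by simp
    have "binz M (int n + 1 - int j) = real (M choose (n + 1 - j))" unfolding e binz_nat ..
    also have "\<dots> = real (M choose (M - (n + 1 - j)))" using n ij unfolding M_def by (subst binomial_symmetric) auto
    also have "M - (n + 1 - j) = k - 1" unfolding M_def k_def using n ij by simp
    finally show ?thesis .
  qed
  have rMk: "real M - real k + 1 = real n - real j + 1" "real k = real n - real i"
    unfolding M_def k_def using n ij by (auto simp: of_nat_diff)
  have Q: "Qz i j (int n) M = real (M choose k) * (real i - real j + 1) / (real n - real j + 1)"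
  proof -
    have d: "real n - real j + 1 > 0" using ij n by simp
    have "Qz i j (int n) M = real (M choose k) - real (M choose k) * real k / (real M - real k + 1)"
      unfolding Qz_def q1 q2 choose_shift[OF k1] ..
    also have "\<dots> = real (M choose k) * (real i - real j + 1) / (real n - real j + 1)"
      unfolding rMk(1) unfolding rMk(2) using d by (simp add: field_simps)
    finally show ?thesis .
  qed
  have nn: "n + n = 2 * n" by simp
  have B: "bal n n = real ((2 * n) choose n) / (real n + 1)" unfolding bal_def nn by simp
  have Mk: "M = 2 * n - i - j" "k = n - i" unfolding M_def k_def by auto
  have pos: "real ((2 * n) choose n) > 0" "real n + 1 > 0" "real n - real j + 1 > 0" using ij n by auto
  have "prob_entry n i (i + j) = bal (i - 1) j * (real (M choose k) * (real i - real j + 1) / (real n - real j + 1)) / (real ((2 * n) choose n) / (real n + 1))"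
    unfolding prob_entry_def K C Q B ..
  also have "\<dots> = bal (i - 1) j * (real i - real j + 1) * (real (M choose k) / real ((2 * n) choose n)) * ((real n + 1) / (real n - real j + 1))"
    by (rule frac_re) (use pos in auto)
  finally show ?thesis unfolding Mk .
qed

lemma prob_lim:
  assumes ij: "j < i"
  shows "(\<lambda>n. prob_entry n i (i + j)) \<longlonglongrightarrow> bal (i - 1) j * (real i - real j + 1) / 2 ^ (i + j)"
proof -
  have l2: "(\<lambda>n. (real n + 1) / (real n - real j + 1)) \<longlonglongrightarrow> 1" by real_asymp
  have "(\<lambda>n. bal (i - 1) j * (real i - real j + 1) *
           (real ((2 * n - i - j) choose (n - i)) / real ((2 * n) choose n)) * ((real n + 1) / (real n - real j + 1)))
        \<longlonglongrightarrow> bal (i - 1) j * (real i - real j + 1) * (1 / 2 ^ (i + j)) * 1"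
    by (intro tendsto_intros ratio_lim l2)
  then have lim: "(\<lambda>n. bal (i - 1) j * (real i - real j + 1) *
           (real ((2 * n - i - j) choose (n - i)) / real ((2 * n) choose n)) * ((real n + 1) / (real n - real j + 1)))
        \<longlonglongrightarrow> bal (i - 1) j * (real i - real j + 1) / 2 ^ (i + j)" by simp
  have ev:  "eventually (\<lambda>n. bal (i - 1) j * (real i - real j + 1) *
           (real ((2 * n - i - j) choose (n - i)) / real ((2 * n) choose n)) * ((real n + 1) / (real n - real j + 1))
        = prob_entry n i (i + j)) sequentially"
    by (rule eventually_sequentiallyI[of "i + 1"]) (simp add: prob_eq[OF ij])
  show ?thesis by (rule Lim_transform_eventually[OF lim ev])
qed

lemma p_formula: "1 \<le> i \<Longrightarrow> j < i \<Longrightarrow> p i (i + j) = pw i j"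
proof -
  assume i: "1 \<le> i" and ij: "j < i"
  have "p i (i + j) = bal (i - 1) j * (real i - real j + 1) / 2 ^ (i + j)"
    unfolding p_def by (rule limI[OF prob_lim[OF ij]])
  also have "\<dots> = pw i j"
    unfolding bal_def pw_def W_def using i by (simp add: of_nat_diff field_simps)
  finally show ?thesis .
qed




lemma sum_reindex: "1 \<le> (i::nat) \<Longrightarrow> (\<Sum>r\<in>{i..2*i-1}. g r) = (\<Sum>j<i. g (i + j))"
  by (rule sum.reindex_bij_witness[of _ "\<lambda>j. i + j" "\<lambda>r. r - i"]) auto

lemma sum_p: "1 \<le> i \<Longrightarrow> (\<Sum>r\<in>{i..2*i-1}. g r (p i r)) = (\<Sum>j<i. g (i + j) (pw i j))"
  by (subst sum_reindex) (auto intro!: sum.cong simp: p_formula)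

lemma E0: "1 \<le> i \<Longrightarrow> E 0 i = 1"
  using E_closed[where Y=Yp0 and K=Kp0 and n=1 and t=0, OF _ _ Yid0, of i]
  by (simp add: Ydiag0 Yd0_def Kp0_def)

definition S :: "nat \<Rightarrow> nat \<Rightarrow> real" where
  "S k i = (\<Sum>r\<in>{i..2*i-1}. (real r - mu i)^k * p i r)"

lemma mu_eq: "1 \<le> i \<Longrightarrow> mu i = 2 * real i - E 1 i"
proof -
  assume i: "1 \<le> i"
  have "mu i = (\<Sum>j<i. real (i + j) * pw i j)"
    unfolding mu_def using sum_p[OF i, of "\<lambda>r q. real r * q"] by simp
  also have "\<dots> = (\<Sum>j<i. 2 * real i * pw i j - (real i - real j) * pw i j)"
    by (intro sum.cong refl) (simp add: algebra_simps)
  also have "\<dots> = 2 * real i * E 0 i - E 1 i"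
    unfolding E_def by (simp add: sum_subtractf sum_distrib_left)
  finally show ?thesis using E0[OF i] by simp
qed

lemma binom_neg: "(e + (- (h::real)))^k * w = (\<Sum>t\<le>k. real (k choose t) * (-1)^t * e ^ (k - t) * (h^t * w))"
proof -
  have "(e + (- h))^k = ((-1) * h + e)^k" by simp
  also have "\<dots> = (\<Sum>t\<le>k. of_nat (k choose t) * ((-1) * h)^t * e^(k-t))" by (rule binomial_ring)
  finally show ?thesis unfolding sum_distrib_right power_mult_distrib
    by (simp only: sum_distrib_left mult.assoc mult.commute mult.left_commute)
qed

lemma S_eq: "1 \<le> i \<Longrightarrow> S k i = (\<Sum>t\<le>k. real (k choose t) * (-1)^t * E 1 i ^ (k - t) * E t i)"
proof -
  assume i: "1 \<le> i"
  have "S k i = (\<Sum>j<i. (E 1 i + (- (real i - real j)))^k * pw i j)"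
    unfolding S_def using sum_p[OF i, of "\<lambda>r q. (real r - mu i)^k * q"] by (simp add: mu_eq[OF i] algebra_simps)
  also have "\<dots> = (\<Sum>j<i. \<Sum>t\<le>k. real (k choose t) * (-1)^t * E 1 i ^ (k - t) * ((real i - real j)^t * pw i j))"
  proof (intro sum.cong refl)
    fix j
    show "(E 1 i + (- (real i - real j)))^k * pw i j = (\<Sum>t\<le>k. real (k choose t) * (-1)^t * E 1 i ^ (k - t) * ((real i - real j)^t * pw i j))"
      by (rule binom_neg)
  qed
  also have "\<dots> = (\<Sum>t\<le>k. real (k choose t) * (-1)^t * E 1 i ^ (k - t) * E t i)"
    unfolding E_def by (subst sum.swap) (simp add: sum_distrib_left)
  finally show ?thesis .
qed

definition Lf :: "nat \<Rightarrow> real" where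
  "Lf t = [1, 4 / sqrt pi, 6, 32 / sqrt pi, 60, 384 / sqrt pi, 840] ! t"

lemma Elim_all: "t \<le> 6 \<Longrightarrow> (\<lambda>i. E t i / sqrt (real i) ^ t) \<longlonglongrightarrow> Lf t"
proof -
  assume "t \<le> 6"
  then have "t = 0 \<or> t = 1 \<or> t = 2 \<or> t = 3 \<or> t = 4 \<or> t = 5 \<or> t = 6" by arith
  then show ?thesis
    using Elim0 Elim1 Elim2 Elim3 Elim4 Elim5 Elim6 unfolding Lf_def by auto
qed

definition N :: "nat \<Rightarrow> real" where
  "N k = (\<Sum>t\<le>k. real (k choose t) * (-1)^t * Lf 1 ^ (k - t) * Lf t)"

lemma S_lim: "k \<le> 6 \<Longrightarrow> (\<lambda>i. S k i / sqrt (real i) ^ k) \<longlonglongrightarrow> N k"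
proof -
  assume k: "k \<le> 6"
  have "(\<lambda>i. \<Sum>t\<le>k. real (k choose t) * (-1)^t * (E 1 i / sqrt (real i) ^ 1) ^ (k - t) * (E t i / sqrt (real i) ^ t)) \<longlonglongrightarrow> N k"
    unfolding N_def using k by (intro tendsto_intros Elim_all) auto
  moreover have "eventually (\<lambda>i. (\<Sum>t\<le>k. real (k choose t) * (-1)^t * (E 1 i / sqrt (real i) ^ 1) ^ (k - t) * (E t i / sqrt (real i) ^ t))
     = S k i / sqrt (real i) ^ k) sequentially"
  proof (rule eventually_sequentiallyI[of 1])
    fix i :: nat assume i: "1 \<le> i"
    have sp: "sqrt (real i) \<noteq> 0" using i by simp
    have "S k i / sqrt (real i) ^ k = (\<Sum>t\<le>k. real (k choose t) * (-1)^t * E 1 i ^ (k - t) * E t i / sqrt (real i) ^ k)"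
      unfolding S_eq[OF i] by (simp add: sum_divide_distrib)
    also have "\<dots> = (\<Sum>t\<le>k. real (k choose t) * (-1)^t * (E 1 i / sqrt (real i) ^ 1) ^ (k - t) * (E t i / sqrt (real i) ^ t))"
    proof (intro sum.cong refl)
      fix t assume "t \<in> {..k}"
      then have "sqrt (real i) ^ k = sqrt (real i) ^ (k - t) * sqrt (real i) ^ t"
        by (simp flip: power_add)
      then show "real (k choose t) * (-1)^t * E 1 i ^ (k - t) * E t i / sqrt (real i) ^ k =
          real (k choose t) * (-1)^t * (E 1 i / sqrt (real i) ^ 1) ^ (k - t) * (E t i / sqrt (real i) ^ t)"
        using sp by (simp add: power_divide)
    qed
    finally show "(\<Sum>t\<le>k. real (k choose t) * (-1)^t * (E 1 i / sqrt (real i) ^ 1) ^ (k - t) * (E t i / sqrt (real i) ^ t))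
     = S k i / sqrt (real i) ^ k" by simp
  qed
  ultimately show ?thesis by (simp add: tendsto_cong)
qed

lemma Lf_vals: "Lf 0 = 1" "Lf 1 = 4 / sqrt pi" "Lf 2 = 6" "Lf 3 = 32 / sqrt pi" "Lf 4 = 60" "Lf 5 = 384 / sqrt pi" "Lf 6 = 840"
  unfolding Lf_def by (simp_all add: numeral_eq_Suc)
lemmas Lf_S = Lf_vals[unfolded eval_nat_numeral]
lemma spi: "sqrt pi ^ 2 = pi" "sqrt pi > 0" by simp_all
lemma spi2: "sqrt pi * sqrt pi = pi" "sqrt pi * (sqrt pi * x) = pi * x" by (simp_all add: mult.assoc[symmetric])
lemma N2: "N 2 = 2 * (3 * pi - 8) / pi"
    unfolding N_def using spi by (simp add: eval_nat_numeral Lf_def field_simps spi2)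
lemma N3: "N 3 = 8 * (5 * pi - 16) / (pi * sqrt pi)"
    unfolding N_def using spi by (simp add: eval_nat_numeral Lf_def field_simps spi2)
lemma N4: "N 4 = 4 * (15*pi^2 + 16*pi - 192) / pi^2"
    unfolding N_def using spi by (simp add: eval_nat_numeral Lf_def field_simps spi2)
lemma N5: "N 5 = 16 * (51*pi^2 - 80*pi - 256) / (pi^2 * sqrt pi)"
    unfolding N_def using spi by (simp add: eval_nat_numeral Lf_def field_simps spi2)
lemma N6: "N 6 = 8 * (105*pi^3 + 648*pi^2 - 2240*pi - 2560) / pi^3"
    unfolding N_def using spi by (simp add: eval_nat_numeral Lf_def field_simps spi2)

lemma pi_gt_3: "pi > 3" using pi_approx by simp

lemma q_facts: "sqrt (3*pi-8) > 0" "sqrt (3*pi-8) * sqrt (3*pi-8) = 3*pi-8"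
  "sqrt (3*pi-8) * (sqrt (3*pi-8) * x) = (3*pi-8) * x"
  using pi_gt_3 by (simp_all add: mult.assoc[symmetric])
lemma s2_facts: "sqrt 2 * sqrt 2 = (2::real)" "sqrt 2 * (sqrt 2 * x) = 2 * (x::real)"
  by (simp_all add: mult.assoc[symmetric])


lemma sN2: "sqrt (N 2) = sqrt 2 * sqrt (3*pi-8) / sqrt pi"
proof -
  define a where "a = 3*pi-8"
  have "N 2 = 2 * a / pi" unfolding N2 a_def by simp
  then show ?thesis unfolding a_def[symmetric] by (simp add: real_sqrt_mult real_sqrt_divide)
qed

lemma powr32: "(3*pi-8) powr (3/2) = sqrt (3*pi-8) ^ 3"
proof -
  have "(3*pi-8) powr (3/2) = ((3*pi-8) powr (1/2)) powr 3" by (simp add: powr_powr)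
  also have "\<dots> = sqrt (3*pi-8) powr 3" using pi_gt_3 by (simp add: powr_half_sqrt)
  also have "\<dots> = sqrt (3*pi-8) ^ 3" using q_facts(1) by (simp add: powr_numeral)
  finally show ?thesis .
qed

lemma powr52: "(3*pi-8) powr (5/2) = sqrt (3*pi-8) ^ 5"
proof -
  have "(3*pi-8) powr (5/2) = ((3*pi-8) powr (1/2)) powr 5" by (simp add: powr_powr)
  also have "\<dots> = sqrt (3*pi-8) powr 5" using pi_gt_3 by (simp add: powr_half_sqrt)
  also have "\<dots> = sqrt (3*pi-8) ^ 5" using q_facts(1) by (simp add: powr_numeral)
  finally show ?thesis .
qed

lemma finals:
  "N 3 / sqrt (N 2) ^ 3 = 2 * (5*pi - 16) * sqrt 2 / (3*pi - 8) powr (3/2)"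
  "N 4 / sqrt (N 2) ^ 4 = (15*pi^2 + 16*pi - 192) / (3*pi - 8)^2"
  "N 5 / sqrt (N 2) ^ 5 = 2 * (51*pi^2 - 80*pi - 256) * sqrt 2 / (3*pi - 8) powr (5/2)"
  "N 6 / sqrt (N 2) ^ 6 = (105*pi^3 + 648*pi^2 - 2240*pi - 2560) / (3*pi - 8)^3"
proof -
  define s where "s = sqrt pi"
  define q where "q = sqrt (3*pi-8)"
  have sp: "s > 0" unfolding s_def by simp
  have qp: "q > 0" unfolding q_def using q_facts by simp
  have e1: "3*pi - 8 = q^2" unfolding q_def using pi_gt_3 by simp
  have e2: "pi = s^2" unfolding s_def by simp
  have r: "sqrt (N 2) = sqrt 2 * q / s" unfolding sN2 s_def q_def ..
  have s3: "sqrt 2 ^ 3 = 2 * sqrt (2::real)" "sqrt 2 ^ 4 = (4::real)" "sqrt 2 ^ 5 = 4 * sqrt (2::real)" "sqrt 2 ^ 6 = (8::real)"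
    by (simp_all add: power_numeral_reduce s2_facts)
  show "N 3 / sqrt (N 2) ^ 3 = 2 * (5*pi - 16) * sqrt 2 / (3*pi - 8) powr (3/2)"
    unfolding r N3 powr32 q_def[symmetric] s_def[symmetric] unfolding e2
    using sp qp by (simp add: field_simps power2_eq_square s2_facts s3, algebra)
  show "N 4 / sqrt (N 2) ^ 4 = (15*pi^2 + 16*pi - 192) / (3*pi - 8)^2"
    unfolding r N4 e1 s_def[symmetric] unfolding e2
    using sp qp by (simp add: field_simps power2_eq_square s2_facts s3, algebra)
  show "N 5 / sqrt (N 2) ^ 5 = 2 * (51*pi^2 - 80*pi - 256) * sqrt 2 / (3*pi - 8) powr (5/2)"
    unfolding r N5 powr52 q_def[symmetric] s_def[symmetric] unfolding e2
    using sp qp by (simp add: field_simps power2_eq_square s2_facts s3, algebra)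
  show "N 6 / sqrt (N 2) ^ 6 = (105*pi^3 + 648*pi^2 - 2240*pi - 2560) / (3*pi - 8)^3"
    unfolding r N6 e1 s_def[symmetric] unfolding e2
    using sp qp by (simp add: field_simps power2_eq_square s2_facts s3)
qed

lemma N2_pos: "N 2 > 0"
  unfolding N2 using pi_gt_3 by simp

lemma std_lim: "k \<le> 6 \<Longrightarrow> (\<lambda>i. std_moment i k) \<longlonglongrightarrow> N k / sqrt (N 2) ^ k"
proof -
  assume k: "k \<le> 6"
  have "(\<lambda>i. (S k i / sqrt (real i) ^ k) / sqrt (S 2 i / sqrt (real i) ^ 2) ^ k) \<longlonglongrightarrow> N k / sqrt (N 2) ^ k"
    using N2_pos by (intro tendsto_intros S_lim k) auto
  moreover have "eventually (\<lambda>i. (S k i / sqrt (real i) ^ k) / sqrt (S 2 i / sqrt (real i) ^ 2) ^ k = std_moment i k) sequentially"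
  proof (rule eventually_sequentiallyI[of 1])
    fix i :: nat assume i: "1 \<le> i"
    have sp: "sqrt (real i) \<noteq> 0" using i by simp
    have "sqrt (S 2 i) = sqrt (S 2 i / sqrt (real i) ^ 2) * sqrt (real i)"
      using i by (simp add: real_sqrt_mult[symmetric])
    then have "Defs.sigma i = sqrt (S 2 i / sqrt (real i) ^ 2) * sqrt (real i)"
      unfolding Defs.sigma_def S_def by simp
    then show "(S k i / sqrt (real i) ^ k) / sqrt (S 2 i / sqrt (real i) ^ 2) ^ k = std_moment i k"
      unfolding std_moment_def S_def[symmetric] using sp by (simp add: power_mult_distrib)
  qed
  ultimately show ?thesis by (simp add: tendsto_cong)
qed


theorem mainTheorem5:
  shows "(\<lambda>i. std_moment i 3) \<longlonglongrightarrow> 2 * (5*pi - 16) * sqrt 2 / (3*pi - 8) powr (3/2)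
       \<and> (\<lambda>i. std_moment i 4) \<longlonglongrightarrow> (15*pi^2 + 16*pi - 192) / (3*pi - 8)^2
       \<and> (\<lambda>i. std_moment i 5) \<longlonglongrightarrow> 2 * (51*pi^2 - 80*pi - 256) * sqrt 2 / (3*pi - 8) powr (5/2)
       \<and> (\<lambda>i. std_moment i 6) \<longlonglongrightarrow> (105*pi^3 + 648*pi^2 - 2240*pi - 2560) / (3*pi - 8)^3"
  using std_lim[of 3] std_lim[of 4] std_lim[of 5] std_lim[of 6] finals by simp

end
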